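(* Let $\mathcal M$ be an elementary extension of the $\mathcal L$-structure $\mathcal Z$, expanded to an $\mathcal L_P$-structure by interpreting the new unary predicate $P$ as an additively random subset $D$ of $M$ which is symmetric ($a\in D\iff -a\in D$). Then the $\mathcal L_P$-theory of $(\mathcal M,D)$ is supersimple of rank $1$: working in a sufficiently saturated model $\mathbb U$ of this theory, every $\mathcal L_P$-formula $\varphi(x,\bar a)$ in a single variable $x$ which divides over a subset $B\subseteq\mathbb U$ is algebraic (has only finitely many realizations).
   Context: $\mathcal L$ is the language of abelian groups $(+,-,0)$ with a constant $1$ and unary predicates $x\equiv_k j$ ($0\le j<k$); $\mathcal Z$ is $\mathbb Z$ with the natural interpretation (congruence modulo $k$); $\mathcal L_P=\mathcal L\cup\{P\}$. A formula $\varphi(x,\bar a)$ divides over $B$ if there is a $B$-indiscernible sequence $(\bar a_n)_{n\in\mathbb N}$ with $\bar a_0=\bar a$ such that $\{\varphi(x,\bar a_n)\}_{n\in\mathbb N}$ is inconsistent. A subset $D\subseteq M$ is additively random if for all $r,r'\in\mathbb N$ and all terms $m_1x+z_1,\ldots,m_rx+z_r$ and $m'_1x+z'_1,\ldots,m'_{r'}x+z'_{r'}$ with all $m_i,m'_j\ge1$ integers, there are an $\mathcal L$-formula $\chi(\bar z,\bar z')$ and a finite set $\partial(\chi)\subseteq\mathbb Z$ such that, for all tuples $\bar b,\bar b'$ in $M$ with $(m_i,b_i)\ne(m'_j,b'_j)$ for all $i,j$: (P1) if $\mathcal M\models\chi(\bar b,\bar b')$ then there are infinitely many $a\in M$ with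 $m_ia+b_i\in D$ for all $i$ and $m'_ja+b'_j\notin D$ for all $j$; (P2) if $\mathcal M\not\models\chi(\bar b,\bar b')$, then $r\ge1$ and there is $k\in\partial(\chi)$ such that for every integer $s\in\{0,\ldots,k-1\}$ some $m_is+b_i\equiv_k0$ (as a first-order statement: $\mathcal M\models\forall\bar y\bar y'((\neg\chi(\bar y,\bar y')\wedge\bigwedge_{i,j}y_i\ne y'_j)\to\bigvee_{k\in\partial(\chi)}\bigwedge_{s<k}\bigvee_{i=1}^r m_is+y_i\equiv_k0))$; (P3) for every $k\in\partial(\chi)$, the set of $x\in D$ with $x\equiv_k0$ is a finite subset of $\mathbb Z$. *)

theory Defs
  imports Main
begin

datatype tm = Var nat | Zero | One | Add tm tm | Neg tm

text \<open>Formulas. Cong k j t stands for the atomic formula t \<equiv>_k j;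
  Pr t is the new unary predicate P (only in L_P).\<close>
datatype fm = Eq tm tm | Cong nat nat tm | Pr tm | Bot
  | Not fm | Conj fm fm | Ex nat fm

fun tvars :: "tm \<Rightarrow> nat set" where
  "tvars (Var v) = {v}"
| "tvars Zero = {}"
| "tvars One = {}"
| "tvars (Add s t) = tvars s \<union> tvars t"
| "tvars (Neg t) = tvars t"

fun fv :: "fm \<Rightarrow> nat set" where
  "fv (Eq s t) = tvars s \<union> tvars t"
| "fv (Cong k j t) = tvars t"
| "fv (Pr t) = tvars t"
| "fv Bot = {}"
| "fv (Not p) = fv p"
| "fv (Conj p q) = fv p \<union> fv q"
| "fv (Ex v p) = fv p - {v}"

fun Lfm :: "fm \<Rightarrow> bool" where
  "Lfm (Pr t) = False"
| "Lfm (Not p) = Lfm p"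
| "Lfm (Conj p q) = (Lfm p \<and> Lfm q)"
| "Lfm (Ex v p) = Lfm p"
| "Lfm _ = True"

text \<open>An L_P-structure whose universe is the whole type 'a.
  An L-structure is the same thing with the field s_P ignored.\<close>
record 'a str =
  s_zero :: 'a
  s_one :: 'a
  s_add :: "'a \<Rightarrow> 'a \<Rightarrow> 'a"
  s_neg :: "'a \<Rightarrow> 'a"
  s_cong :: "nat \<Rightarrow> nat \<Rightarrow> 'a \<Rightarrow> bool"
  s_P :: "'a \<Rightarrow> bool"

fun tval :: "'a str \<Rightarrow> (nat \<Rightarrow> 'a) \<Rightarrow> tm \<Rightarrow> 'a" where
  "tval S \<sigma> (Var v) = \<sigma> v"
| "tval S \<sigma> Zero = s_zero S"
| "tval S \<sigma> One = s_one S"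
| "tval S \<sigma> (Add s t) = s_add S (tval S \<sigma> s) (tval S \<sigma> t)"
| "tval S \<sigma> (Neg t) = s_neg S (tval S \<sigma> t)"

fun sat :: "'a str \<Rightarrow> fm \<Rightarrow> (nat \<Rightarrow> 'a) \<Rightarrow> bool" where
  "sat S (Eq s t) \<sigma> = (tval S \<sigma> s = tval S \<sigma> t)"
| "sat S (Cong k j t) \<sigma> = s_cong S k j (tval S \<sigma> t)"
| "sat S (Pr t) \<sigma> = s_P S (tval S \<sigma> t)"
| "sat S Bot \<sigma> = False"
| "sat S (Not p) \<sigma> = (\<not> sat S p \<sigma>)"
| "sat S (Conj p q) \<sigma> = (sat S p \<sigma> \<and> sat S q \<sigma>)"
| "sat S (Ex v p) \<sigma> = (\<exists>a. sat S p (\<sigma>(v := a)))"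

definition Zstr :: "int str" where
  "Zstr = \<lparr> s_zero = 0, s_one = 1, s_add = (+), s_neg = uminus,
            s_cong = (\<lambda>k j x. 0 < k \<and> j < k \<and> x mod int k = int j),
            s_P = (\<lambda>_. False) \<rparr>"

definition elem_ext_of_Z :: "(int \<Rightarrow> 'a) \<Rightarrow> 'a str \<Rightarrow> bool" where
  "elem_ext_of_Z e M \<longleftrightarrow>
     (\<forall>\<phi> \<sigma>. Lfm \<phi> \<longrightarrow> (sat Zstr \<phi> \<sigma> \<longleftrightarrow> sat M \<phi> (e \<circ> \<sigma>)))"

definition expand :: "'a str \<Rightarrow> 'a set \<Rightarrow> 'a str" where
  "expand M D = M\<lparr> s_P := (\<lambda>a. a \<in> D) \<rparr>"

definition elem_equiv :: "'a str \<Rightarrow> 'b str \<Rightarrow> bool" where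
  "elem_equiv S T \<longleftrightarrow>
     (\<forall>\<phi>. fv \<phi> = {} \<longrightarrow> (sat S \<phi> (\<lambda>_. undefined) \<longleftrightarrow> sat T \<phi> (\<lambda>_. undefined)))"

definition smul :: "'a str \<Rightarrow> nat \<Rightarrow> 'a \<Rightarrow> 'a" where
  "smul M n a = ((s_add M a) ^^ n) (s_zero M)"

text \<open>Assignment sending z_1..z_r to variables 0..r-1 and z'_1..z'_r' to r..r+r'-1.\<close>
definition zasg :: "'a list \<Rightarrow> 'a list \<Rightarrow> nat \<Rightarrow> 'a" where
  "zasg bs bs' v = (if v < length bs then bs ! v else bs' ! (v - length bs))"

definition additively_random :: "'a str \<Rightarrow> (int \<Rightarrow> 'a) \<Rightarrow> 'a set \<Rightarrow> bool" where
  "additively_random M e D \<longleftrightarrow>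
    (\<forall>ms ms' :: nat list. (\<forall>m\<in>set ms. 1 \<le> m) \<and> (\<forall>m\<in>set ms'. 1 \<le> m) \<longrightarrow>
      (\<exists>\<chi> (Dl::nat set). Lfm \<chi> \<and> fv \<chi> \<subseteq> {..<length ms + length ms'} \<and>
         finite Dl \<and> (\<forall>k\<in>Dl. 1 \<le> k) \<and>
         (\<forall>bs bs'. length bs = length ms \<and> length bs' = length ms' \<and>
            (\<forall>i<length ms. \<forall>j<length ms'. (ms ! i, bs ! i) \<noteq> (ms' ! j, bs' ! j)) \<longrightarrow>
            (sat M \<chi> (zasg bs bs') \<longrightarrow>
               infinite {a. (\<forall>i<length ms. s_add M (smul M (ms ! i) a) (bs ! i) \<in> D) \<and>
                            (\<forall>j<length ms'. s_add M (smul M (ms' ! j) a) (bs' ! j) \<notin> D)}) \<and>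
            (\<not> sat M \<chi> (zasg bs bs') \<longrightarrow>
               1 \<le> length ms \<and>
               (\<exists>k\<in>Dl. \<forall>s<k. \<exists>i<length ms.
                   s_cong M k 0 (s_add M (smul M (ms ! i * s) (s_one M)) (bs ! i))))) \<and>
         (\<forall>k\<in>Dl. {x \<in> D. s_cong M k 0 x} \<subseteq> range e \<and> finite {x \<in> D. s_cong M k 0 x})))"

text \<open>|A| \<le> |B| + aleph_0.\<close>
definition small_wrt :: "'b set \<Rightarrow> 'b set \<Rightarrow> bool" where
  "small_wrt A B \<longleftrightarrow> (\<exists>f :: 'b \<Rightarrow> 'b + nat. inj_on f A \<and> f ` A \<subseteq> Inl ` B \<union> range Inr)"

text \<open>U is (|B| + aleph_0)^+-saturated: every set of L_P-formulas in the variable 0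
  with parameters from a set A with |A| \<le> |B| + aleph_0 which is finitely
  satisfiable in U is realized in U.\<close>
definition saturated_for :: "'b str \<Rightarrow> 'b set \<Rightarrow> bool" where
  "saturated_for U B \<longleftrightarrow>
    (\<forall>A (\<Sigma> :: (fm \<times> (nat \<Rightarrow> 'b)) set).
       small_wrt A B \<and> (\<forall>(\<phi>,\<sigma>)\<in>\<Sigma>. \<forall>v\<in>fv \<phi> - {0}. \<sigma> v \<in> A) \<and>
       (\<forall>F\<subseteq>\<Sigma>. finite F \<longrightarrow> (\<exists>c. \<forall>(\<phi>,\<sigma>)\<in>F. sat U \<phi> (\<sigma>(0 := c)))) \<longrightarrow>
       (\<exists>c. \<forall>(\<phi>,\<sigma>)\<in>\<Sigma>. sat U \<phi> (\<sigma>(0 := c))))"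

definition seq_asg :: "nat \<Rightarrow> nat \<Rightarrow> (nat \<Rightarrow> nat) \<Rightarrow> (nat \<Rightarrow> 'b list) \<Rightarrow> (nat \<Rightarrow> 'b) \<Rightarrow> nat \<Rightarrow> 'b" where
  "seq_asg l n f s \<beta> v = (if v < n * l then s (f (v div l)) ! (v mod l) else \<beta> v)"

definition indiscernible :: "'b str \<Rightarrow> 'b set \<Rightarrow> nat \<Rightarrow> (nat \<Rightarrow> 'b list) \<Rightarrow> bool" where
  "indiscernible U B l s \<longleftrightarrow> (\<forall>i. length (s i) = l) \<and>
    (\<forall>n \<psi> \<beta> f g. strict_mono_on {..<n} f \<and> strict_mono_on {..<n} g \<and>
        (\<forall>v\<in>fv \<psi>. n * l \<le> v \<longrightarrow> \<beta> v \<in> B) \<longrightarrow>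
        (sat U \<psi> (seq_asg l n f s \<beta>) \<longleftrightarrow> sat U \<psi> (seq_asg l n g s \<beta>)))"

text \<open>Assignment for \<phi>(x, a): x is variable 0, a_1..a_l are variables 1..l.\<close>
definition tup :: "'b list \<Rightarrow> 'b \<Rightarrow> nat \<Rightarrow> 'b" where
  "tup as c v = (if v = 0 then c else if v \<le> length as then as ! (v - 1) else undefined)"

definition divides :: "'b str \<Rightarrow> 'b set \<Rightarrow> fm \<Rightarrow> 'b list \<Rightarrow> bool" where
  "divides U B \<phi> as \<longleftrightarrow>
    (\<exists>s. indiscernible U B (length as) s \<and> s 0 = as \<and>
         \<not> (\<forall>N. finite N \<longrightarrow> (\<exists>c. \<forall>n\<in>N. sat U \<phi> (tup (s n) c))))"

end

theory Submission
  imports Defs "HOL-Library.Countable_Set"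
begin


lemma finite_tvars[simp]: "finite (tvars t)"
  by (induction t) auto

lemma finite_fv[simp]: "finite (fv p)"
  by (induction p) auto

lemma tval_cong: "(\<And>v. v \<in> tvars t \<Longrightarrow> \<sigma> v = \<sigma>' v) \<Longrightarrow> tval S \<sigma> t = tval S \<sigma>' t"
  by (induction t) auto

lemma sat_cong: "(\<And>v. v \<in> fv p \<Longrightarrow> \<sigma> v = \<sigma>' v) \<Longrightarrow> sat S p \<sigma> = sat S p \<sigma>'"
proof (induction p arbitrary: \<sigma> \<sigma>')
  case (Eq s t) then show ?case using tval_cong[of s \<sigma> \<sigma>' S] tval_cong[of t \<sigma> \<sigma>' S] by simp
next
  case (Cong k j t) then show ?case using tval_cong[of t \<sigma> \<sigma>' S] by simp
next
  case (Pr t) then show ?case using tval_cong[of t \<sigma> \<sigma>' S] by simp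
next
  case Bot then show ?case by simp
next
  case (Not p)
  have "sat S p \<sigma> = sat S p \<sigma>'" by (rule Not.IH) (use Not.prems in simp)
  then show ?case by simp
next
  case (Conj p q) 
  have "sat S p \<sigma> = sat S p \<sigma>'" by (rule Conj.IH(1)) (use Conj.prems in simp)
  moreover have "sat S q \<sigma> = sat S q \<sigma>'" by (rule Conj.IH(2)) (use Conj.prems in simp)
  ultimately show ?case by simp
next
  case (Ex v p)
  have "\<And>a. sat S p (\<sigma>(v := a)) = sat S p (\<sigma>'(v := a))"
    by (rule Ex.IH) (use Ex.prems in auto)
  then show ?case by simp
qed

lemma tval_upd_notin[simp]: "v \<notin> tvars t \<Longrightarrow> tval S (\<sigma>(v := a)) t = tval S \<sigma> t"
  by (rule tval_cong) auto

lemma sat_upd_notin: "v \<notin> fv p \<Longrightarrow> sat S p (\<sigma>(v := a)) = sat S p \<sigma>"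
  by (rule sat_cong) auto

abbreviation "FImp p q \<equiv> Not (Conj p (Not q))"
abbreviation "FOr p q \<equiv> Not (Conj (Not p) (Not q))"
abbreviation "FAll v p \<equiv> Not (Ex v (Not p))"
abbreviation "FIff p q \<equiv> Conj (FImp p q) (FImp q p)"
abbreviation "Top \<equiv> Not Bot"

definition bigAnd :: "fm list \<Rightarrow> fm" where "bigAnd ps = foldr Conj ps Top"
definition bigOr :: "fm list \<Rightarrow> fm" where "bigOr ps = foldr FOr ps Bot"

lemma sat_bigAnd[simp]: "sat S (bigAnd ps) \<sigma> = (\<forall>p\<in>set ps. sat S p \<sigma>)"
  by (induction ps) (auto simp: bigAnd_def)
lemma sat_bigOr[simp]: "sat S (bigOr ps) \<sigma> = (\<exists>p\<in>set ps. sat S p \<sigma>)"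
  by (induction ps) (auto simp: bigOr_def)
lemma fv_bigAnd[simp]: "fv (bigAnd ps) = (\<Union>p\<in>set ps. fv p)"
  by (induction ps) (auto simp: bigAnd_def)
lemma fv_bigOr[simp]: "fv (bigOr ps) = (\<Union>p\<in>set ps. fv p)"
  by (induction ps) (auto simp: bigOr_def)
lemma Lfm_bigAnd[simp]: "Lfm (bigAnd ps) = (\<forall>p\<in>set ps. Lfm p)"
  by (induction ps) (auto simp: bigAnd_def)
lemma Lfm_bigOr[simp]: "Lfm (bigOr ps) = (\<forall>p\<in>set ps. Lfm p)"
  by (induction ps) (auto simp: bigOr_def)

lemma sat_bigAnd_map[simp]: "sat S (bigAnd (map f xs)) \<sigma> = (\<forall>x\<in>set xs. sat S (f x) \<sigma>)"
  by simp
lemma sat_bigOr_map[simp]: "sat S (bigOr (map f xs)) \<sigma> = (\<exists>x\<in>set xs. sat S (f x) \<sigma>)"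
  by simp
lemma ball_upt[simp]: "(\<forall>x\<in>{0..<(n::nat)}. P x) = (\<forall>x<n. P x)" by auto
lemma bex_upt[simp]: "(\<exists>x\<in>{0..<(n::nat)}. P x) = (\<exists>x<n. P x)" by auto

definition allC :: "nat list \<Rightarrow> fm \<Rightarrow> fm" where "allC vs p = foldr FAll vs p"

lemma fv_allC[simp]: "fv (allC vs p) = fv p - set vs"
  by (induction vs) (auto simp: allC_def)
lemma Lfm_allC[simp]: "Lfm (allC vs p) = Lfm p"
  by (induction vs) (auto simp: allC_def)

lemma sat_allC: "sat S (allC vs p) \<sigma> = (\<forall>\<tau>. (\<forall>v. v \<notin> set vs \<longrightarrow> \<tau> v = \<sigma> v) \<longrightarrow> sat S p \<tau>)"
proof (induction vs arbitrary: \<sigma>)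
  case Nil
  have "(\<forall>\<tau>. (\<forall>v. v \<notin> set [] \<longrightarrow> \<tau> v = \<sigma> v) \<longrightarrow> sat S p \<tau>) = sat S p \<sigma>"
  proof
    assume "\<forall>\<tau>. (\<forall>v. v \<notin> set [] \<longrightarrow> \<tau> v = \<sigma> v) \<longrightarrow> sat S p \<tau>"
    then show "sat S p \<sigma>" by auto
  next
    assume "sat S p \<sigma>"
    then show "\<forall>\<tau>. (\<forall>v. v \<notin> set [] \<longrightarrow> \<tau> v = \<sigma> v) \<longrightarrow> sat S p \<tau>"
      by (metis empty_iff empty_set ext)
  qed
  then show ?case by (metis allC_def foldr.simps(1) id_apply)
next
  case (Cons v vs)
  have "sat S (allC (v # vs) p) \<sigma> = (\<forall>a. sat S (allC vs p) (\<sigma>(v := a)))"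
    by (simp add: allC_def)
  also have "\<dots> = (\<forall>a \<tau>. (\<forall>w. w \<notin> set vs \<longrightarrow> \<tau> w = (\<sigma>(v := a)) w) \<longrightarrow> sat S p \<tau>)"
    using Cons by blast
  also have "\<dots> = (\<forall>\<tau>. (\<forall>w. w \<notin> set (v # vs) \<longrightarrow> \<tau> w = \<sigma> w) \<longrightarrow> sat S p \<tau>)"
  proof
    assume A: "\<forall>a \<tau>. (\<forall>w. w \<notin> set vs \<longrightarrow> \<tau> w = (\<sigma>(v := a)) w) \<longrightarrow> sat S p \<tau>"
    show "\<forall>\<tau>. (\<forall>w. w \<notin> set (v # vs) \<longrightarrow> \<tau> w = \<sigma> w) \<longrightarrow> sat S p \<tau>"
    proof (intro allI impI)
      fix \<tau> assume B: "\<forall>w. w \<notin> set (v # vs) \<longrightarrow> \<tau> w = \<sigma> w"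
      have "\<forall>w. w \<notin> set vs \<longrightarrow> \<tau> w = (\<sigma>(v := \<tau> v)) w"
        using B by simp
      then show "sat S p \<tau>" using A by blast
    qed
  next
    assume A: "\<forall>\<tau>. (\<forall>w. w \<notin> set (v # vs) \<longrightarrow> \<tau> w = \<sigma> w) \<longrightarrow> sat S p \<tau>"
    show "\<forall>a \<tau>. (\<forall>w. w \<notin> set vs \<longrightarrow> \<tau> w = (\<sigma>(v := a)) w) \<longrightarrow> sat S p \<tau>"
    proof (intro allI impI)
      fix a \<tau> assume B: "\<forall>w. w \<notin> set vs \<longrightarrow> \<tau> w = (\<sigma>(v := a)) w"
      have "\<forall>w. w \<notin> set (v # vs) \<longrightarrow> \<tau> w = \<sigma> w"
        using B by simp
      then show "sat S p \<tau>" using A by blast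
    qed
  qed
  finally show ?case .
qed

definition closure :: "fm \<Rightarrow> fm" where "closure p = allC (sorted_list_of_set (fv p)) p"

lemma fv_closure[simp]: "fv (closure p) = {}"
  by (simp add: closure_def)
lemma Lfm_closure[simp]: "Lfm (closure p) = Lfm p"
  by (simp add: closure_def)
lemma sat_closure: "sat S (closure p) \<sigma> = (\<forall>\<tau>. sat S p \<tau>)"
proof -
  have "sat S (closure p) \<sigma> = (\<forall>\<tau>. (\<forall>v. v \<notin> fv p \<longrightarrow> \<tau> v = \<sigma> v) \<longrightarrow> sat S p \<tau>)"
    by (simp add: closure_def sat_allC)
  also have "\<dots> = (\<forall>\<tau>. sat S p \<tau>)"
  proof safe
    fix \<tau> assume A: "\<forall>\<tau>. (\<forall>v. v \<notin> fv p \<longrightarrow> \<tau> v = \<sigma> v) \<longrightarrow> sat S p \<tau>"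
    let ?t = "\<lambda>v. if v \<in> fv p then \<tau> v else \<sigma> v"
    have "sat S p ?t" using A by auto
    moreover have "sat S p ?t = sat S p \<tau>" by (rule sat_cong) auto
    ultimately show "sat S p \<tau>" by simp
  qed auto
  finally show ?thesis .
qed

lemma expand_simps[simp]: "s_zero (expand M D) = s_zero M" "s_one (expand M D) = s_one M"
  "s_add (expand M D) = s_add M" "s_neg (expand M D) = s_neg M" "s_cong (expand M D) = s_cong M"
  "s_P (expand M D) = (\<lambda>a. a \<in> D)"
  by (auto simp: expand_def)

lemma tval_expand[simp]: "tval (expand M D) \<sigma> t = tval M \<sigma> t"
  by (induction t) auto

lemma sat_expand_L: "Lfm p \<Longrightarrow> sat (expand M D) p \<sigma> = sat M p \<sigma>"
  by (induction p arbitrary: \<sigma>) auto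

fun mulT :: "nat \<Rightarrow> tm \<Rightarrow> tm" where
  "mulT 0 t = Zero"
| "mulT (Suc n) t = Add t (mulT n t)"

definition zmulT :: "int \<Rightarrow> tm \<Rightarrow> tm" where
  "zmulT i t = (if 0 \<le> i then mulT (nat i) t else Neg (mulT (nat (- i)) t))"

definition numT :: "int \<Rightarrow> tm" where "numT i = zmulT i One"

lemma tvars_mulT[simp]: "tvars (mulT n t) = (if n = 0 then {} else tvars t)"
  by (induction n) auto
lemma tvars_zmulT[simp]: "tvars (zmulT i t) = (if i = 0 then {} else tvars t)"
  by (auto simp: zmulT_def)
lemma tvars_numT[simp]: "tvars (numT i) = {}"
  by (simp add: numT_def)

lemma Zstr_simps[simp]: "s_zero Zstr = 0" "s_one Zstr = 1" "s_add Zstr = (+)" "s_neg Zstr = uminus"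
  "s_cong Zstr k j x = (0 < k \<and> j < k \<and> x mod int k = int j)"
  by (auto simp: Zstr_def)

lemma tvalZ_mulT[simp]: "tval Zstr \<sigma> (mulT n t) = int n * tval Zstr \<sigma> t"
  by (induction n) (auto simp: algebra_simps)
lemma tvalZ_zmulT[simp]: "tval Zstr \<sigma> (zmulT i t) = i * tval Zstr \<sigma> t"
  by (auto simp: zmulT_def)
lemma tvalZ_numT[simp]: "tval Zstr \<sigma> (numT i) = i"
  by (simp add: numT_def)

fun mapvars :: "(nat \<Rightarrow> nat) \<Rightarrow> tm \<Rightarrow> tm" where
  "mapvars g (Var v) = Var (g v)"
| "mapvars g Zero = Zero"
| "mapvars g One = One"
| "mapvars g (Add s t) = Add (mapvars g s) (mapvars g t)"
| "mapvars g (Neg t) = Neg (mapvars g t)"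

lemma tval_mapvars: "tval S \<sigma> (mapvars g t) = tval S (\<sigma> \<circ> g) t"
  by (induction t) auto
lemma tvars_mapvars[simp]: "tvars (mapvars g t) = g ` tvars t"
  by (induction t) auto

fun coefx :: "nat \<Rightarrow> tm \<Rightarrow> int" where
  "coefx x (Var v) = (if v = x then 1 else 0)"
| "coefx x Zero = 0"
| "coefx x One = 0"
| "coefx x (Add s t) = coefx x s + coefx x t"
| "coefx x (Neg t) = - coefx x t"

fun restx :: "nat \<Rightarrow> tm \<Rightarrow> tm" where
  "restx x (Var v) = (if v = x then Zero else Var v)"
| "restx x Zero = Zero"
| "restx x One = One"
| "restx x (Add s t) = Add (restx x s) (restx x t)"
| "restx x (Neg t) = Neg (restx x t)"

lemma tvars_restx[simp]: "tvars (restx x t) = tvars t - {x}"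
  by (induction t) auto

lemma tvalZ_decomp: "tval Zstr \<sigma> t = coefx x t * \<sigma> x + tval Zstr \<sigma> (restx x t)"
  by (induction t) (auto simp: algebra_simps)

fun enc :: "tm \<Rightarrow> nat" where
  "enc (Var v) = prod_encode (0, v)"
| "enc Zero = prod_encode (1, 0)"
| "enc One = prod_encode (2, 0)"
| "enc (Add s t) = prod_encode (3, prod_encode (enc s, enc t))"
| "enc (Neg t) = prod_encode (4, enc t)"

lemma inj_enc: "inj enc"
proof (rule injI)
  fix s t show "enc s = enc t \<Longrightarrow> s = t"
  proof (induction s arbitrary: t)
    case (Var x) then show ?case by (cases t) (auto simp: prod_encode_eq)
  next
    case Zero then show ?case by (cases t) (auto simp: prod_encode_eq)
  next
    case One then show ?case by (cases t) (auto simp: prod_encode_eq)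
  next
    case (Add s1 s2) then show ?case by (cases t) (auto simp: prod_encode_eq)
  next
    case (Neg s) then show ?case by (cases t) (auto simp: prod_encode_eq)
  qed
qed

lemma countable_tm: "countable (UNIV :: tm set)"
  using inj_enc by (rule countableI)


locale setting =
  fixes M :: "'a str" and e :: "int \<Rightarrow> 'a" and D :: "'a set" and U :: "'b str" and B :: "'b set"
  assumes ext: "elem_ext_of_Z e M"
    and rand: "additively_random M e D"
    and symm: "\<forall>a. a \<in> D \<longleftrightarrow> s_neg M a \<in> D"
    and model: "elem_equiv (expand M D) U"
    and sat_U: "saturated_for U B"
begin

lemma transM: assumes "\<And>\<sigma>. sat (expand M D) p \<sigma>" shows "sat U p \<tau>"
proof -
  have "sat (expand M D) (closure p) (\<lambda>_. undefined)" using assms by (simp add: sat_closure)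
  then have "sat U (closure p) (\<lambda>_. undefined)" using model by (simp add: elem_equiv_def)
  then show ?thesis by (simp add: sat_closure)
qed

lemma transZ: assumes "Lfm p" "\<And>\<sigma>. sat Zstr p \<sigma>" shows "sat U p \<tau>"
proof -
  have "sat Zstr (closure p) (\<lambda>_. 0)" using assms by (simp add: sat_closure)
  then have "sat M (closure p) (e \<circ> (\<lambda>_. 0))" using ext assms(1) by (simp add: elem_ext_of_Z_def)
  then have "\<forall>\<sigma>. sat M p \<sigma>" by (simp add: sat_closure)
  then have "\<And>\<sigma>. sat (expand M D) p \<sigma>" using assms(1) by (simp add: sat_expand_L)
  then show ?thesis by (rule transM)
qed

lemma transZ_eq: assumes "\<And>\<sigma>. tval Zstr \<sigma> s = tval Zstr \<sigma> t" shows "tval U \<tau> s = tval U \<tau> t"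
  using transZ[of "Eq s t" \<tau>] assms by simp

abbreviation "pl \<equiv> s_add U"
abbreviation "ng \<equiv> s_neg U"
abbreviation "zr \<equiv> s_zero U"
abbreviation "on \<equiv> s_one U"
abbreviation "cg \<equiv> s_cong U"
abbreviation "DU \<equiv> {x. s_P U x}"

definition mU :: "nat \<Rightarrow> 'b \<Rightarrow> 'b" where "mU m x = (pl x ^^ m) zr"
definition zU :: "int \<Rightarrow> 'b \<Rightarrow> 'b" where
  "zU i x = (if 0 \<le> i then mU (nat i) x else ng (mU (nat (- i)) x))"
definition numU :: "int \<Rightarrow> 'b" where "numU i = zU i on"

lemma mU_0[simp]: "mU 0 x = zr" by (simp add: mU_def)
lemma mU_Suc: "mU (Suc m) x = pl x (mU m x)" by (simp add: mU_def)

lemma tvalU_mulT[simp]: "tval U \<sigma> (mulT m t) = mU m (tval U \<sigma> t)"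
  by (induction m) (auto simp: mU_Suc)
lemma tvalU_zmulT[simp]: "tval U \<sigma> (zmulT i t) = zU i (tval U \<sigma> t)"
  by (auto simp: zmulT_def zU_def)
lemma tvalU_numT[simp]: "tval U \<sigma> (numT i) = numU i"
  by (simp add: numT_def numU_def)

definition asg :: "'b list \<Rightarrow> nat \<Rightarrow> 'b" where "asg xs v = (if v < length xs then xs ! v else zr)"
lemma asg_simps[simp]: "asg xs 0 = (if xs = [] then zr else hd xs)" "asg (x # xs) (Suc n) = asg xs n"
  by (auto simp: asg_def hd_conv_nth)

lemma add_assoc: "pl (pl x y) z = pl x (pl y z)"
  using transZ_eq[of "Add (Add (Var 0) (Var 1)) (Var 2)" "Add (Var 0) (Add (Var 1) (Var 2))" "asg [x,y,z]"] by (simp add: asg_def)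
lemma add_comm: "pl x y = pl y x"
  using transZ_eq[of "Add (Var 0) (Var 1)" "Add (Var 1) (Var 0)" "asg [x,y]"] by simp
lemma add_left_comm: "pl x (pl y z) = pl y (pl x z)"
  by (metis add_assoc add_comm)
lemma add_zero[simp]: "pl x zr = x"
  using transZ_eq[of "Add (Var 0) Zero" "Var 0" "asg [x]"] by simp
lemma zero_add[simp]: "pl zr x = x"
  using add_zero add_comm by metis
lemma add_neg[simp]: "pl x (ng x) = zr"
  using transZ_eq[of "Add (Var 0) (Neg (Var 0))" "Zero" "asg [x]"] by simp
lemma neg_add[simp]: "pl (ng x) x = zr"
  using add_neg add_comm by metis
lemma add_neg_cancel[simp]: "pl x (pl (ng x) y) = y"
  by (metis add_assoc add_neg zero_add)
lemma neg_add_cancel[simp]: "pl (ng x) (pl x y) = y"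
  by (metis add_assoc neg_add zero_add)
lemma neg_neg[simp]: "ng (ng x) = x"
  using transZ_eq[of "Neg (Neg (Var 0))" "Var 0" "asg [x]"] by simp
lemma neg_zero[simp]: "ng zr = zr"
  using transZ_eq[of "Neg Zero" "Zero" "asg []"] by simp
lemma neg_pl: "ng (pl x y) = pl (ng x) (ng y)"
  using transZ_eq[of "Neg (Add (Var 0) (Var 1))" "Add (Neg (Var 0)) (Neg (Var 1))" "asg [x,y]"] by simp
lemma add_cancel_left: "pl x y = pl x z \<longleftrightarrow> y = z"
  by (metis neg_add_cancel)
lemma eq_iff_diff: "x = y \<longleftrightarrow> pl x (ng y) = zr"
  by (metis add_neg add_neg_cancel add_zero add_comm)
lemma neg_eq_iff[simp]: "ng x = ng y \<longleftrightarrow> x = y"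
  by (metis neg_neg)
lemma neg_eq_zero[simp]: "ng x = zr \<longleftrightarrow> x = zr"
  by (metis neg_neg neg_zero)

lemmas add_ac = add_assoc add_comm add_left_comm

lemma mU_1[simp]: "mU 1 x = x" by (simp add: mU_def)
lemma mU_add: "mU (m + n) x = pl (mU m x) (mU n x)"
  using transZ_eq[of "mulT (m + n) (Var 0)" "Add (mulT m (Var 0)) (mulT n (Var 0))" "asg [x]"]
  by (simp add: algebra_simps)
lemma mU_mult: "mU (m * n) x = mU m (mU n x)"
  using transZ_eq[of "mulT (m * n) (Var 0)" "mulT m (mulT n (Var 0))" "asg [x]"] by simp
lemma mU_pl: "mU m (pl x y) = pl (mU m x) (mU m y)"
  using transZ_eq[of "mulT m (Add (Var 0) (Var 1))" "Add (mulT m (Var 0)) (mulT m (Var 1))" "asg [x,y]"]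
  by (simp add: algebra_simps)
lemma mU_ng: "mU m (ng x) = ng (mU m x)"
  using transZ_eq[of "mulT m (Neg (Var 0))" "Neg (mulT m (Var 0))" "asg [x]"] by simp
lemma mU_zr[simp]: "mU m zr = zr"
  using transZ_eq[of "mulT m Zero" "Zero" "asg []"] by simp

lemma zU_nat[simp]: "zU (int m) x = mU m x" by (simp add: zU_def)
lemma zU_add: "zU (i + j) x = pl (zU i x) (zU j x)"
  using transZ_eq[of "zmulT (i + j) (Var 0)" "Add (zmulT i (Var 0)) (zmulT j (Var 0))" "asg [x]"]
  by (simp add: algebra_simps)
lemma zU_mult: "zU (i * j) x = zU i (zU j x)"
  using transZ_eq[of "zmulT (i * j) (Var 0)" "zmulT i (zmulT j (Var 0))" "asg [x]"] by simp
lemma zU_pl: "zU i (pl x y) = pl (zU i x) (zU i y)"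
  using transZ_eq[of "zmulT i (Add (Var 0) (Var 1))" "Add (zmulT i (Var 0)) (zmulT i (Var 1))" "asg [x,y]"]
  by (simp add: algebra_simps)
lemma zU_ng: "zU i (ng x) = ng (zU i x)"
  using transZ_eq[of "zmulT i (Neg (Var 0))" "Neg (zmulT i (Var 0))" "asg [x]"] by simp
lemma zU_neg: "zU (- i) x = ng (zU i x)"
  using transZ_eq[of "zmulT (- i) (Var 0)" "Neg (zmulT i (Var 0))" "asg [x]"] by simp
lemma zU_0[simp]: "zU 0 x = zr" by (simp add: zU_def)
lemma mU_zU: "mU m (zU i x) = zU (int m * i) x"
  using transZ_eq[of "mulT m (zmulT i (Var 0))" "zmulT (int m * i) (Var 0)" "asg [x]"] by simp
lemma numU_add: "numU (i + j) = pl (numU i) (numU j)" by (simp add: numU_def zU_add)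
lemma mU_numU: "mU m (numU i) = numU (int m * i)" by (simp add: numU_def mU_zU)
lemma numU_0[simp]: "numU 0 = zr" by (simp add: numU_def)
lemma numU_neg: "numU (- i) = ng (numU i)" by (simp add: numU_def zU_neg)

section \<open>Transferred formula facts\<close>

lemma torsion_free: assumes "1 \<le> m" "mU m x = mU m y" shows "x = y"
proof -
  have "sat U (FImp (Eq (mulT m (Var 0)) (mulT m (Var 1))) (Eq (Var 0) (Var 1))) (asg [x, y])"
    by (rule transZ) (use assms(1) in auto)
  then show ?thesis using assms by simp
qed

lemma mU_inj[simp]: "1 \<le> m \<Longrightarrow> mU m x = mU m y \<longleftrightarrow> x = y"
  using torsion_free by blast

lemma cong_range: assumes "cg k j x" shows "0 < k \<and> j < k"
proof (rule ccontr)
  assume A: "\<not> (0 < k \<and> j < k)"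
  have "sat U (Not (Cong k j (Var 0))) (asg [x])"
    by (rule transZ) (use A in auto)
  then show False using assms by simp
qed

lemma cong_exists: assumes "0 < k" shows "\<exists>j<k. cg k j x"
proof -
  have "sat U (bigOr (map (\<lambda>j. Cong k j (Var 0)) [0..<k])) (asg [x])"
  proof (rule transZ)
    fix \<sigma> :: "nat \<Rightarrow> int"
    have "nat (\<sigma> 0 mod int k) < k" using assms by (simp add: nat_less_iff)
    moreover have "\<sigma> 0 mod int k = int (nat (\<sigma> 0 mod int k))" using assms by simp
    ultimately show "sat Zstr (bigOr (map (\<lambda>j. Cong k j (Var 0)) [0..<k])) \<sigma>"
      using assms by (auto intro!: bexI[of _ "nat (\<sigma> 0 mod int k)"])
  qed simp
  then show ?thesis by auto
qed

lemma cong_unique: assumes "cg k j x" "cg k j' x" shows "j = j'"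
proof (rule ccontr)
  assume A: "j \<noteq> j'"
  have "sat U (Not (Conj (Cong k j (Var 0)) (Cong k j' (Var 0)))) (asg [x])"
    by (rule transZ) (use A in auto)
  then show False using assms by simp
qed

lemma cong_div: assumes "0 < k" "j < k"
  shows "cg k j x \<longleftrightarrow> (\<exists>w. x = pl (mU k w) (numU (int j)))"
proof -
  have "sat U (FIff (Cong k j (Var 0)) (Ex 1 (Eq (Var 0) (Add (mulT k (Var 1)) (numT (int j)))))) (asg [x])"
  proof (rule transZ)
    fix \<sigma> :: "nat \<Rightarrow> int"
    have "(\<sigma> 0 mod int k = int j) \<longleftrightarrow> (\<exists>a. \<sigma> 0 = int k * a + int j)"
    proof
      assume h: "\<sigma> 0 mod int k = int j"
      have "\<sigma> 0 = int k * (\<sigma> 0 div int k) + int j"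
        using mult_div_mod_eq[of "int k" "\<sigma> 0"] h by simp
      then show "\<exists>a. \<sigma> 0 = int k * a + int j" by blast
    next
      assume "\<exists>a. \<sigma> 0 = int k * a + int j"
      then obtain a where a: "\<sigma> 0 = int k * a + int j" by blast
      have "(int k * a + int j) mod int k = int j mod int k" by simp
      also have "\<dots> = int j" using assms by simp
      finally show "\<sigma> 0 mod int k = int j" using a by simp
    qed
    then show "sat Zstr (FIff (Cong k j (Var 0)) (Ex 1 (Eq (Var 0) (Add (mulT k (Var 1)) (numT (int j)))))) \<sigma>"
      using assms by auto
  qed simp
  then show ?thesis by (auto simp: asg_def)
qed

lemma cong_zero_iff: assumes "0 < k" shows "cg k 0 x \<longleftrightarrow> (\<exists>w. x = mU k w)"
  using cong_div[OF assms, of 0 x] assms by simp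

lemma cong_mU: "0 < k \<Longrightarrow> cg k 0 (mU k w)"
  using cong_zero_iff by blast

lemma cong_lin: assumes "cg k r x" "cg k r' y"
  shows "cg k j (pl (zU a x) y) \<longleftrightarrow> cg k j (numU (a * int r + int r'))"
proof -
  have "sat U (FImp (Conj (Cong k r (Var 0)) (Cong k r' (Var 1)))
     (FIff (Cong k j (Add (zmulT a (Var 0)) (Var 1))) (Cong k j (numT (a * int r + int r'))))) (asg [x, y])"
  proof (rule transZ)
    fix \<sigma> :: "nat \<Rightarrow> int"
    have key: "\<sigma> 0 mod int k = int r \<Longrightarrow> \<sigma> 1 mod int k = int r' \<Longrightarrow>
       (a * \<sigma> 0 + \<sigma> 1) mod int k = (a * int r + int r') mod int k"
    proof -
      assume h: "\<sigma> 0 mod int k = int r" "\<sigma> 1 mod int k = int r'"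
      have "(a * int r + int r') mod int k = (a * (\<sigma> 0 mod int k) + \<sigma> 1 mod int k) mod int k"
        using h by simp
      also have "\<dots> = (a * (\<sigma> 0 mod int k) + \<sigma> 1) mod int k"
        by (metis mod_add_right_eq)
      also have "\<dots> = ((a * (\<sigma> 0 mod int k)) mod int k + \<sigma> 1) mod int k"
        by (metis mod_add_left_eq)
      also have "\<dots> = ((a * \<sigma> 0) mod int k + \<sigma> 1) mod int k"
        by (metis mod_mult_right_eq)
      also have "\<dots> = (a * \<sigma> 0 + \<sigma> 1) mod int k"
        by (metis mod_add_left_eq)
      finally show ?thesis by simp
    qed
    show "sat Zstr (FImp (Conj (Cong k r (Var 0)) (Cong k r' (Var 1)))
     (FIff (Cong k j (Add (zmulT a (Var 0)) (Var 1))) (Cong k j (numT (a * int r + int r'))))) \<sigma>"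
      using key by simp
  qed simp
  then show ?thesis using assms by (auto simp: asg_def)
qed

lemma cong_scale: assumes "1 \<le> m" shows "cg k j x \<longleftrightarrow> cg (m * k) (m * j) (mU m x)"
proof -
  have "sat U (FIff (Cong k j (Var 0)) (Cong (m * k) (m * j) (mulT m (Var 0)))) (asg [x])"
  proof (rule transZ)
    fix \<sigma> :: "nat \<Rightarrow> int"
    have m: "0 < int m" using assms by simp
    have "(0 < k \<and> j < k \<and> \<sigma> 0 mod int k = int j) \<longleftrightarrow>
      (0 < m * k \<and> m * j < m * k \<and> (int m * \<sigma> 0) mod (int m * int k) = int m * int j)"
    proof -
      have e: "(int m * \<sigma> 0) mod (int m * int k) = int m * (\<sigma> 0 mod int k)" by (rule mod_mult_mult1)
      have "int m * (\<sigma> 0 mod int k) = int m * int j \<longleftrightarrow> \<sigma> 0 mod int k = int j" using m by simp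
      moreover have "0 < m * k \<longleftrightarrow> 0 < k" using assms by simp
      moreover have "m * j < m * k \<longleftrightarrow> j < k" using assms by simp
      ultimately show ?thesis by (simp only: e)
    qed
    then show "sat Zstr (FIff (Cong k j (Var 0)) (Cong (m * k) (m * j) (mulT m (Var 0)))) \<sigma>"
      by (auto simp: of_nat_mult)
  qed simp
  then show ?thesis by auto
qed

lemma cong_numU: "cg k j (numU n) \<longleftrightarrow> (0 < k \<and> j < k \<and> n mod int k = int j)"
proof (cases "0 < k \<and> j < k \<and> n mod int k = int j")
  case True
  have "sat U (Cong k j (numT n)) (asg [])" by (rule transZ) (use True in auto)
  then show ?thesis using True by simp
next
  case False
  have "sat U (Not (Cong k j (numT n))) (asg [])" by (rule transZ) (use False in auto)
  then show ?thesis using False by simp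
qed

lemma cong_dvd: assumes "k dvd K" "cg K r x" shows "cg k (r mod k) x"
proof -
  have K: "0 < K" "r < K" using cong_range[OF assms(2)] by auto
  have k: "0 < k" using assms(1) K by (auto intro: Nat.gr0I)
  have "sat U (FImp (Cong K r (Var 0)) (Cong k (r mod k) (Var 0))) (asg [x])"
  proof (rule transZ)
    fix \<sigma> :: "nat \<Rightarrow> int"
    have "\<sigma> 0 mod int K = int r \<Longrightarrow> \<sigma> 0 mod int k = int (r mod k)" using assms(1)
      by (metis mod_mod_cancel of_nat_dvd_iff zmod_int)
    then show "sat Zstr (FImp (Cong K r (Var 0)) (Cong k (r mod k) (Var 0))) \<sigma>"
      using k by auto
  qed simp
  then show ?thesis using assms by simp
qed

lemma cong_base: assumes "0 < K" "r < K" shows "cg K r (pl (mU K x) (numU (int r)))"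
  using cong_div[OF assms] by blast

lemma cong_shift: assumes "0 < m" "m dvd K"
  shows "cg m 0 (pl (mU (a * K) x) y) \<longleftrightarrow> cg m 0 y"
proof -
  have "sat U (FIff (Cong m 0 (Add (mulT (a * K) (Var 0)) (Var 1))) (Cong m 0 (Var 1))) (asg [x, y])"
  proof (rule transZ)
    fix \<sigma> :: "nat \<Rightarrow> int"
    have "int m dvd int (a * K)" using assms(2) by simp
    then have "(int (a * K) * \<sigma> 0 + \<sigma> (Suc 0)) mod int m = \<sigma> (Suc 0) mod int m"
      by (metis dvd_mult2 mod_mult_self4 mult.commute dvd_def)
    then show "sat Zstr (FIff (Cong m 0 (Add (mulT (a * K) (Var 0)) (Var 1))) (Cong m 0 (Var 1))) \<sigma>"
      using assms by simp
  qed simp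
  then show ?thesis by auto
qed

lemma symmU: "s_P U x \<longleftrightarrow> s_P U (ng x)"
proof -
  have "sat U (FIff (Pr (Var 0)) (Pr (Neg (Var 0)))) (asg [x])"
    by (rule transM) (use symm in auto)
  then show ?thesis by auto
qed

end


lemma tvalM_mulT: "tval M \<sigma> (mulT m t) = smul M m (tval M \<sigma> t)"
  by (induction m) (auto simp: smul_def)

lemma smul_expand[simp]: "smul (expand M D) m a = smul M m a"
  by (simp add: smul_def)

context setting
begin

lemma ext_sat: "Lfm p \<Longrightarrow> sat Zstr p \<sigma> = sat M p (e \<circ> \<sigma>)"
  using ext unfolding elem_ext_of_Z_def by blast

lemma e_inj: "inj e"
proof (rule injI)
  fix a b assume h: "e a = e b"
  have "sat Zstr (Eq (Var 0) (Var 1)) (\<lambda>v. if v = 0 then a else b) \<longleftrightarrow>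
        sat M (Eq (Var 0) (Var 1)) (e \<circ> (\<lambda>v. if v = 0 then a else b))"
    by (rule ext_sat) simp
  then show "a = b" using h by simp
qed

lemma tvalM_numT: "tval M \<sigma> (numT n) = e n"
proof -
  have "sat Zstr (Eq (Var 0) (numT n)) (\<lambda>_. n) \<longleftrightarrow> sat M (Eq (Var 0) (numT n)) (e \<circ> (\<lambda>_. n))"
    by (rule ext_sat) simp
  then have "e n = tval M (e \<circ> (\<lambda>_. n)) (numT n)" by simp
  also have "\<dots> = tval M \<sigma> (numT n)" by (rule tval_cong) simp
  finally show ?thesis by simp
qed

definition distF :: "nat list \<Rightarrow> nat list \<Rightarrow> fm" where
  "distF ms ms' = bigAnd (map (\<lambda>(i, j). if ms ! i = ms' ! j then Not (Eq (Var i) (Var (length ms + j))) else Top)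
      (List.product [0..<length ms] [0..<length ms']))"

definition patF :: "nat list \<Rightarrow> nat list \<Rightarrow> nat \<Rightarrow> fm" where
  "patF ms ms' X = Conj (bigAnd (map (\<lambda>i. Pr (Add (mulT (ms ! i) (Var X)) (Var i))) [0..<length ms])) (bigAnd (
      map (\<lambda>j. Not (Pr (Add (mulT (ms' ! j) (Var X)) (Var (length ms + j))))) [0..<length ms']))"

definition avF :: "nat \<Rightarrow> nat \<Rightarrow> nat \<Rightarrow> fm" where
  "avF X b N = bigAnd (map (\<lambda>t. Not (Eq (Var X) (Var (b + t)))) [0..<N])"

definition p2F :: "nat list \<Rightarrow> nat set \<Rightarrow> fm" where
  "p2F ms Dl = bigOr (map (\<lambda>k. bigAnd (map (\<lambda>s. bigOr (map (\<lambda>i. Cong k 0 (Add (mulT (ms ! i * s) One) (Var i)))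
      [0..<length ms])) [0..<k])) (sorted_list_of_set Dl))"

definition RF :: "nat list \<Rightarrow> nat list \<Rightarrow> nat \<Rightarrow> nat set \<Rightarrow> fm" where
  "RF ms ms' N Dl = FImp (distF ms ms')
     (FOr (Ex (length ms + length ms' + N) (Conj (patF ms ms' (length ms + length ms' + N))
                 (avF (length ms + length ms' + N) (length ms + length ms') N)))
          (p2F ms Dl))"

lemma sat_distF: "sat S (distF ms ms') \<sigma> \<longleftrightarrow>
   (\<forall>i<length ms. \<forall>j<length ms'. ms ! i = ms' ! j \<longrightarrow> \<sigma> i \<noteq> \<sigma> (length ms + j))"
  by (auto simp: distF_def split: if_splits)

lemma sat_patF: "sat S (patF ms ms' X) \<sigma> \<longleftrightarrow>
   (\<forall>i<length ms. s_P S (s_add S (tval S \<sigma> (mulT (ms ! i) (Var X))) (\<sigma> i))) \<and>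
   (\<forall>j<length ms'. \<not> s_P S (s_add S (tval S \<sigma> (mulT (ms' ! j) (Var X))) (\<sigma> (length ms + j))))"
  by (auto simp: patF_def)

lemma sat_avF: "sat S (avF X b N) \<sigma> \<longleftrightarrow> (\<forall>t<N. \<sigma> X \<noteq> \<sigma> (b + t))"
  by (auto simp: avF_def)

lemma sat_p2F: "finite Dl \<Longrightarrow> sat S (p2F ms Dl) \<sigma> \<longleftrightarrow>
   (\<exists>k\<in>Dl. \<forall>s<k. \<exists>i<length ms. s_cong S k 0 (s_add S (tval S \<sigma> (mulT (ms ! i * s) One)) (\<sigma> i)))"
  by (auto simp: p2F_def)

lemma RF_valid_M:
  assumes ms: "\<forall>m\<in>set ms. 1 \<le> m" and ms': "\<forall>m\<in>set ms'. 1 \<le> m"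
    and \<chi>: "Lfm \<chi>" "fv \<chi> \<subseteq> {..<length ms + length ms'}"
    and Dl: "finite Dl"
    and P12: "\<forall>bs bs'. length bs = length ms \<and> length bs' = length ms' \<and>
            (\<forall>i<length ms. \<forall>j<length ms'. (ms ! i, bs ! i) \<noteq> (ms' ! j, bs' ! j)) \<longrightarrow>
            (sat M \<chi> (zasg bs bs') \<longrightarrow>
               infinite {a. (\<forall>i<length ms. s_add M (smul M (ms ! i) a) (bs ! i) \<in> D) \<and>
                            (\<forall>j<length ms'. s_add M (smul M (ms' ! j) a) (bs' ! j) \<notin> D)}) \<and>
            (\<not> sat M \<chi> (zasg bs bs') \<longrightarrow>
               1 \<le> length ms \<and>
               (\<exists>k\<in>Dl. \<forall>s<k. \<exists>i<length ms.
                   s_cong M k 0 (s_add M (smul M (ms ! i * s) (s_one M)) (bs ! i))))"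
  shows "sat (expand M D) (RF ms ms' N Dl) \<sigma>"
proof -
  define r where "r = length ms"
  define r' where "r' = length ms'"
  define X where "X = r + r' + N"
  define bs where "bs = map \<sigma> [0..<r]"
  define bs' where "bs' = map (\<lambda>j. \<sigma> (r + j)) [0..<r']"
  have lens: "length bs = length ms" "length bs' = length ms'" by (auto simp: bs_def bs'_def r_def r'_def)
  have bsi: "\<And>i. i < r \<Longrightarrow> bs ! i = \<sigma> i" by (simp add: bs_def)
  have bsj: "\<And>j. j < r' \<Longrightarrow> bs' ! j = \<sigma> (r + j)" by (simp add: bs'_def)
  have bsi': "\<And>i. i < length ms \<Longrightarrow> bs ! i = \<sigma> i" by (simp add: bs_def r_def)
  show ?thesis
  proof (cases "sat (expand M D) (distF ms ms') \<sigma>")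
    case False then show ?thesis by (simp add: RF_def)
  next
    case True
    then have dist: "\<forall>i<length ms. \<forall>j<length ms'. (ms ! i, bs ! i) \<noteq> (ms' ! j, bs' ! j)"
      by (auto simp: sat_distF bsi bsj r_def r'_def)
    have P: "(sat M \<chi> (zasg bs bs') \<longrightarrow>
               infinite {a. (\<forall>i<length ms. s_add M (smul M (ms ! i) a) (bs ! i) \<in> D) \<and>
                            (\<forall>j<length ms'. s_add M (smul M (ms' ! j) a) (bs' ! j) \<notin> D)}) \<and>
            (\<not> sat M \<chi> (zasg bs bs') \<longrightarrow>
               (\<exists>k\<in>Dl. \<forall>s<k. \<exists>i<length ms.
                   s_cong M k 0 (s_add M (smul M (ms ! i * s) (s_one M)) (bs ! i))))"
      using P12[rule_format, OF conjI[OF lens(1) conjI[OF lens(2) dist]]] by blast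
    show ?thesis
    proof (cases "sat M \<chi> (zasg bs bs')")
      case True
      then have inf: "infinite {a. (\<forall>i<length ms. s_add M (smul M (ms ! i) a) (bs ! i) \<in> D) \<and>
                            (\<forall>j<length ms'. s_add M (smul M (ms' ! j) a) (bs' ! j) \<notin> D)}" (is "infinite ?S")
        using P by blast
      have "infinite (?S - \<sigma> ` {r + r'..<r + r' + N})"
        using inf by (simp add: Diff_infinite_finite)
      then obtain a where a: "a \<in> ?S - \<sigma> ` {r + r'..<r + r' + N}"
        using infinite_imp_nonempty by blast
      have "sat (expand M D) (patF ms ms' X) (\<sigma>(X := a))"
        using a by (auto simp: sat_patF tvalM_mulT X_def bsi bsj r_def r'_def)
      moreover have "sat (expand M D) (avF X (r + r') N) (\<sigma>(X := a))"
        using a by (auto simp: sat_avF X_def)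
      ultimately show ?thesis by (auto simp: RF_def X_def r_def r'_def)
    next
      case False
      then obtain k where k: "k \<in> Dl" "\<forall>s<k. \<exists>i<length ms.
                   s_cong M k 0 (s_add M (smul M (ms ! i * s) (s_one M)) (bs ! i))"
        using P by blast
      have "\<forall>s<k. \<exists>i<length ms.
                   s_cong M k 0 (s_add M (smul M (ms ! i * s) (s_one M)) (\<sigma> i))"
      proof (intro allI impI)
        fix s assume "s < k"
        then obtain i where "i < length ms" "s_cong M k 0 (s_add M (smul M (ms ! i * s) (s_one M)) (bs ! i))"
          using k by blast
        then show "\<exists>i<length ms. s_cong M k 0 (s_add M (smul M (ms ! i * s) (s_one M)) (\<sigma> i))"
          using bsi' by auto
      qed
      then have "sat (expand M D) (p2F ms Dl) \<sigma>"
        using Dl k(1) by (auto simp: sat_p2F tvalM_mulT)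
      then show ?thesis by (simp add: RF_def)
    qed
  qed
qed

definition zl :: "'b list \<Rightarrow> 'b list \<Rightarrow> 'b list \<Rightarrow> nat \<Rightarrow> 'b" where
  "zl bs bs' ys v = (if v < length bs then bs ! v else if v < length bs + length bs' then bs' ! (v - length bs)
     else if v < length bs + length bs' + length ys then ys ! (v - length bs - length bs') else zr)"

lemma randU:
  assumes ms: "\<forall>m\<in>set ms. 1 \<le> m" and ms': "\<forall>m\<in>set ms'. 1 \<le> m"
  shows "\<exists>Dl. finite Dl \<and> (\<forall>k\<in>Dl. 0 < k) \<and>
     (\<forall>k\<in>Dl. \<exists>F. finite F \<and> (\<forall>x. s_P U x \<and> cg k 0 x \<longrightarrow> (\<exists>n\<in>F. x = numU n))) \<and>
     (\<forall>bs bs' ys. length bs = length ms \<and> length bs' = length ms' \<and>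
        (\<forall>i<length ms. \<forall>j<length ms'. (ms ! i, bs ! i) \<noteq> (ms' ! j, bs' ! j)) \<longrightarrow>
        (\<exists>x. x \<notin> set ys \<and> (\<forall>i<length ms. s_P U (pl (mU (ms ! i) x) (bs ! i))) \<and>
             (\<forall>j<length ms'. \<not> s_P U (pl (mU (ms' ! j) x) (bs' ! j)))) \<or>
        (\<exists>k\<in>Dl. \<forall>s<k. \<exists>i<length ms. cg k 0 (pl (mU (ms ! i * s) on) (bs ! i))))"
proof -
  obtain \<chi> Dl where \<chi>: "Lfm \<chi>" "fv \<chi> \<subseteq> {..<length ms + length ms'}" and Dl: "finite Dl" "\<forall>k\<in>Dl. 1 \<le> k"
    and P12: "\<forall>bs bs'. length bs = length ms \<and> length bs' = length ms' \<and>
            (\<forall>i<length ms. \<forall>j<length ms'. (ms ! i, bs ! i) \<noteq> (ms' ! j, bs' ! j)) \<longrightarrow>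
            (sat M \<chi> (zasg bs bs') \<longrightarrow>
               infinite {a. (\<forall>i<length ms. s_add M (smul M (ms ! i) a) (bs ! i) \<in> D) \<and>
                            (\<forall>j<length ms'. s_add M (smul M (ms' ! j) a) (bs' ! j) \<notin> D)}) \<and>
            (\<not> sat M \<chi> (zasg bs bs') \<longrightarrow>
               1 \<le> length ms \<and>
               (\<exists>k\<in>Dl. \<forall>s<k. \<exists>i<length ms.
                   s_cong M k 0 (s_add M (smul M (ms ! i * s) (s_one M)) (bs ! i))))"
    and P3: "\<forall>k\<in>Dl. {x \<in> D. s_cong M k 0 x} \<subseteq> range e \<and> finite {x \<in> D. s_cong M k 0 x}"
    using rand[unfolded additively_random_def, rule_format, OF conjI[OF ms ms']]
    by blast
  have P3U: "\<exists>F. finite F \<and> (\<forall>x. s_P U x \<and> cg k 0 x \<longrightarrow> (\<exists>n\<in>F. x = numU n))" if k: "k \<in> Dl" for k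
  proof -
    define F where "F = e -` {x \<in> D. s_cong M k 0 x}"
    have fin: "finite F" unfolding F_def
      by (rule finite_vimageI) (use P3 k e_inj in auto)
    have "sat (expand M D) (FAll 0 (FImp (Conj (Pr (Var 0)) (Cong k 0 (Var 0)))
            (bigOr (map (\<lambda>n. Eq (Var 0) (numT n)) (sorted_list_of_set F))))) \<sigma>" for \<sigma>
    proof -
      have "\<exists>n\<in>F. a = e n" if "a \<in> D" "s_cong M k 0 a" for a
        using P3 k that unfolding F_def by blast
      then show ?thesis using fin by (auto simp: tvalM_numT)
    qed
    then have "sat U (FAll 0 (FImp (Conj (Pr (Var 0)) (Cong k 0 (Var 0)))
            (bigOr (map (\<lambda>n. Eq (Var 0) (numT n)) (sorted_list_of_set F))))) (asg [])"
      by (rule transM)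
    then show ?thesis using fin by (auto intro!: exI[of _ F])
  qed
  have main: "(\<exists>x. x \<notin> set ys \<and> (\<forall>i<length ms. s_P U (pl (mU (ms ! i) x) (bs ! i))) \<and>
             (\<forall>j<length ms'. \<not> s_P U (pl (mU (ms' ! j) x) (bs' ! j)))) \<or>
        (\<exists>k\<in>Dl. \<forall>s<k. \<exists>i<length ms. cg k 0 (pl (mU (ms ! i * s) on) (bs ! i)))"
    if lens: "length bs = length ms" "length bs' = length ms'"
      and dist: "\<forall>i<length ms. \<forall>j<length ms'. (ms ! i, bs ! i) \<noteq> (ms' ! j, bs' ! j)" for bs bs' ys
  proof -
    let ?N = "length ys"
    let ?X = "length ms + length ms' + ?N"
    let ?\<rho> = "zl bs bs' ys"
    have sat: "sat U (RF ms ms' ?N Dl) ?\<rho>"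
      by (rule transM, rule RF_valid_M[OF ms ms' \<chi> Dl(1) P12])
    have r1: "\<And>i. i < length ms \<Longrightarrow> ?\<rho> i = bs ! i" using lens by (simp add: zl_def)
    have r2: "\<And>j. j < length ms' \<Longrightarrow> ?\<rho> (length ms + j) = bs' ! j" using lens by (simp add: zl_def)
    have r3: "\<And>t. t < ?N \<Longrightarrow> ?\<rho> (length ms + length ms' + t) = ys ! t" using lens by (simp add: zl_def)
    have "sat U (distF ms ms') ?\<rho>"
      using dist by (auto simp: sat_distF r1 r2)
    then have "sat U (Ex ?X (Conj (patF ms ms' ?X) (avF ?X (length ms + length ms') ?N))) ?\<rho> \<or>
               sat U (p2F ms Dl) ?\<rho>"
      using sat by (auto simp: RF_def)
    then show ?thesis
    proof
      assume "sat U (Ex ?X (Conj (patF ms ms' ?X) (avF ?X (length ms + length ms') ?N))) ?\<rho>"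
      then obtain a where a: "sat U (patF ms ms' ?X) (?\<rho>(?X := a))" "sat U (avF ?X (length ms + length ms') ?N) (?\<rho>(?X := a))"
        by auto
      have "a \<notin> set ys"
      proof
        assume "a \<in> set ys"
        then obtain t where "t < ?N" "ys ! t = a" by (auto simp: in_set_conv_nth)
        then show False using a(2) r3 by (auto simp: sat_avF)
      qed
      moreover have "\<forall>i<length ms. s_P U (pl (mU (ms ! i) a) (bs ! i))"
        using a(1) by (auto simp: sat_patF r1)
      moreover have "\<forall>j<length ms'. \<not> s_P U (pl (mU (ms' ! j) a) (bs' ! j))"
        using a(1) by (auto simp: sat_patF r2)
      ultimately show ?thesis by blast
    next
      assume "sat U (p2F ms Dl) ?\<rho>"
      then obtain k where k: "k \<in> Dl" "\<forall>s<k. \<exists>i<length ms. cg k 0 (pl (mU (ms ! i * s) on) (?\<rho> i))"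
        using Dl(1) by (auto simp: sat_p2F)
      have "\<forall>s<k. \<exists>i<length ms. cg k 0 (pl (mU (ms ! i * s) on) (bs ! i))"
      proof (intro allI impI)
        fix s assume "s < k"
        then obtain i where "i < length ms" "cg k 0 (pl (mU (ms ! i * s) on) (?\<rho> i))"
          using k by blast
        then show "\<exists>i<length ms. cg k 0 (pl (mU (ms ! i * s) on) (bs ! i))"
          using r1 by auto
      qed
      then show ?thesis using k(1) by blast
    qed
  qed
  show ?thesis
  proof (intro exI[of _ Dl] conjI ballI allI impI)
    show "finite Dl" by (rule Dl(1))
  next
    fix k assume "k \<in> Dl" then show "0 < k" using Dl(2) by auto
  next
    fix k assume "k \<in> Dl" then show "\<exists>F. finite F \<and> (\<forall>x. s_P U x \<and> cg k 0 x \<longrightarrow> (\<exists>n\<in>F. x = numU n))"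
      by (rule P3U)
  next
    fix bs bs' ys :: "'b list"
    assume "length bs = length ms \<and> length bs' = length ms' \<and>
        (\<forall>i<length ms. \<forall>j<length ms'. (ms ! i, bs ! i) \<noteq> (ms' ! j, bs' ! j))"
    then show "(\<exists>x. x \<notin> set ys \<and> (\<forall>i<length ms. s_P U (pl (mU (ms ! i) x) (bs ! i))) \<and>
             (\<forall>j<length ms'. \<not> s_P U (pl (mU (ms' ! j) x) (bs' ! j)))) \<or>
        (\<exists>k\<in>Dl. \<forall>s<k. \<exists>i<length ms. cg k 0 (pl (mU (ms ! i * s) on) (bs ! i)))"
      using main by blast
  qed
qed

end


context setting
begin

definition Dx :: "nat \<Rightarrow> 'b \<Rightarrow> bool" where "Dx m y \<longleftrightarrow> (\<exists>w. mU m w = y \<and> s_P U w)"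

definition good :: "(nat \<Rightarrow> 'b) \<Rightarrow> (nat \<Rightarrow> 'b) \<Rightarrow> nat set \<Rightarrow> bool" where
  "good \<sigma> \<tau> V \<longleftrightarrow> (\<forall>t. tvars t \<subseteq> V \<longrightarrow>
     (\<forall>k j. cg k j (tval U \<sigma> t) \<longleftrightarrow> cg k j (tval U \<tau> t)) \<and>
     (tval U \<sigma> t = zr \<longleftrightarrow> tval U \<tau> t = zr) \<and>
     (\<forall>m\<ge>1. Dx m (tval U \<sigma> t) \<longleftrightarrow> Dx m (tval U \<tau> t)))"

definition generic :: "(nat \<Rightarrow> 'b) \<Rightarrow> nat set \<Rightarrow> 'b \<Rightarrow> bool" where
  "generic \<sigma> V u \<longleftrightarrow> (\<forall>m\<ge>1. \<forall>t. tvars t \<subseteq> V \<longrightarrow> mU m u \<noteq> tval U \<sigma> t)"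

lemma good_sym: "good \<sigma> \<tau> V \<Longrightarrow> good \<tau> \<sigma> V"
  unfolding good_def by metis

lemma good_mono: "good \<sigma> \<tau> V \<Longrightarrow> W \<subseteq> V \<Longrightarrow> good \<sigma> \<tau> W"
  unfolding good_def by (meson order_trans)

lemma goodD:
  assumes "good \<sigma> \<tau> V" "tvars t \<subseteq> V"
  shows "cg k j (tval U \<sigma> t) \<longleftrightarrow> cg k j (tval U \<tau> t)"
    "tval U \<sigma> t = zr \<longleftrightarrow> tval U \<tau> t = zr"
    "1 \<le> m \<Longrightarrow> Dx m (tval U \<sigma> t) \<longleftrightarrow> Dx m (tval U \<tau> t)"
  using assms unfolding good_def by blast+

lemma goodI:
  assumes "\<And>t k j. tvars t \<subseteq> V \<Longrightarrow> cg k j (tval U \<sigma> t) \<longleftrightarrow> cg k j (tval U \<tau> t)"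
    "\<And>t. tvars t \<subseteq> V \<Longrightarrow> tval U \<sigma> t = zr \<longleftrightarrow> tval U \<tau> t = zr"
    "\<And>t m. tvars t \<subseteq> V \<Longrightarrow> 1 \<le> m \<Longrightarrow> Dx m (tval U \<sigma> t) \<longleftrightarrow> Dx m (tval U \<tau> t)"
  shows "good \<sigma> \<tau> V"
  using assms unfolding good_def by blast

lemma decompU: "tval U \<rho> t = pl (zU (coefx x t) (\<rho> x)) (tval U \<rho> (restx x t))"
  using transZ_eq[of t "Add (zmulT (coefx x t) (Var x)) (restx x t)" \<rho>]
  by (simp add: tvalZ_decomp[of _ t x])

lemma sum_zero_iff: "pl z w = zr \<longleftrightarrow> z = ng w"
  by (metis add_neg add_neg_cancel add_zero add_comm)

lemma Dx_1: "Dx 1 y \<longleftrightarrow> s_P U y"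
  unfolding Dx_def by (metis mU_1)

lemma Dx_neg: "Dx m (ng y) \<longleftrightarrow> Dx m y"
proof
  assume "Dx m (ng y)"
  then obtain w where "mU m w = ng y" "s_P U w" by (auto simp: Dx_def)
  then have "mU m (ng w) = y" "s_P U (ng w)" using symmU by (auto simp: mU_ng)
  then show "Dx m y" by (auto simp: Dx_def)
next
  assume "Dx m y"
  then obtain w where "mU m w = y" "s_P U w" by (auto simp: Dx_def)
  then have "mU m (ng w) = ng y" "s_P U (ng w)" using symmU by (auto simp: mU_ng)
  then show "Dx m (ng y)" by (auto simp: Dx_def)
qed

lemma Dx_scale: assumes "1 \<le> m" shows "Dx m' y \<longleftrightarrow> Dx (m * m') (mU m y)"
  using assms by (auto simp: Dx_def mU_mult)

lemma Dx_mU: assumes "1 \<le> m" shows "Dx m (mU m z) \<longleftrightarrow> s_P U z"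
  using assms by (auto simp: Dx_def)

lemma Dx_cong: assumes "Dx m y" "1 \<le> m" shows "cg m 0 y"
  using assms cong_mU by (auto simp: Dx_def)

lemma tval_restx_upd: "tval U (\<rho>(x := a)) (restx x t) = tval U \<rho> (restx x t)"
  by (rule tval_upd_notin) simp

lemma verify:
  assumes g: "good \<sigma> \<tau> V" and x: "x \<notin> V"
    and gu: "generic \<sigma> V u" and gv: "generic \<tau> V v"
    and cgs: "\<And>k j. cg k j v \<longleftrightarrow> cg k j u"
    and Dc: "\<And>m a t. 1 \<le> m \<Longrightarrow> 1 \<le> a \<Longrightarrow> tvars t \<subseteq> V \<Longrightarrow>
       Dx m (pl (mU a v) (tval U \<tau> t)) \<longleftrightarrow> Dx m (pl (mU a u) (tval U \<sigma> t))"
  shows "good (\<sigma>(x := u)) (\<tau>(x := v)) (insert x V)"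
proof (rule goodI)
  fix t assume tv: "tvars t \<subseteq> insert x V"
  define a where "a = coefx x t"
  define t' where "t' = restx x t"
  have t'V: "tvars t' \<subseteq> V" using tv by (auto simp: t'_def)
  have ys: "tval U (\<sigma>(x := u)) t = pl (zU a u) (tval U \<sigma> t')"
    using decompU[of "\<sigma>(x := u)" t x] by (simp add: a_def t'_def tval_restx_upd)
  have yt: "tval U (\<tau>(x := v)) t = pl (zU a v) (tval U \<tau> t')"
    using decompU[of "\<tau>(x := v)" t x] by (simp add: a_def t'_def tval_restx_upd)
  {
    fix k j
    show "cg k j (tval U (\<sigma>(x := u)) t) \<longleftrightarrow> cg k j (tval U (\<tau>(x := v)) t)"
    proof (cases "0 < k")
      case False
      then show ?thesis using cong_range by blast
    next
      case True
      obtain r where r: "r < k" "cg k r u" using cong_exists[OF True] by blast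
      obtain r' where r': "r' < k" "cg k r' (tval U \<sigma> t')" using cong_exists[OF True] by blast
      have r'': "cg k r' (tval U \<tau> t')" using r' goodD(1)[OF g t'V] by blast
      have rv: "cg k r v" using r cgs by blast
      show ?thesis unfolding ys yt using cong_lin[OF r(2) r'(2)] cong_lin[OF rv r''] by simp
    qed
  }
  have nz: "pl (zU a w) (tval U \<rho> t') \<noteq> zr" if "a \<noteq> 0" "generic \<rho> V w" for w \<rho>
  proof
    assume h: "pl (zU a w) (tval U \<rho> t') = zr"
    show False
    proof (cases "0 < a")
      case True
      then have "mU (nat a) w = tval U \<rho> (Neg t')" using h by (simp add: sum_zero_iff zU_def)
      moreover have "1 \<le> nat a" using True by simp
      moreover have "tvars (Neg t') \<subseteq> V" using t'V by simp
      ultimately show False using that(2) unfolding generic_def by blast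
    next
      case False
      then have "ng (mU (nat (- a)) w) = ng (tval U \<rho> t')" using h that(1) by (simp add: sum_zero_iff zU_def)
      then have "mU (nat (- a)) w = tval U \<rho> t'" by simp
      moreover have "1 \<le> nat (- a)" using False that(1) by simp
      ultimately show False using that(2) t'V unfolding generic_def by blast
    qed
  qed
  show "tval U (\<sigma>(x := u)) t = zr \<longleftrightarrow> tval U (\<tau>(x := v)) t = zr"
  proof (cases "a = 0")
    case True
    then show ?thesis unfolding ys yt using goodD(2)[OF g t'V] by simp
  next
    case False
    then show ?thesis unfolding ys yt using nz[OF False gu] nz[OF False gv] by simp
  qed
  fix m :: nat assume m: "1 \<le> m"
  show "Dx m (tval U (\<sigma>(x := u)) t) \<longleftrightarrow> Dx m (tval U (\<tau>(x := v)) t)"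
  proof (cases a "0::int" rule: linorder_cases)
    case equal
    then show ?thesis unfolding ys yt using goodD(3)[OF g t'V m] by simp
  next
    case greater
    then have "zU a u = mU (nat a) u" "zU a v = mU (nat a) v" by (auto simp: zU_def)
    moreover have "1 \<le> nat a" using greater by simp
    ultimately show ?thesis unfolding ys yt using Dc[OF m _ t'V] by simp
  next
    case less
    have e1: "ng (pl (zU a w) y) = pl (mU (nat (- a)) w) (tval U \<rho> (Neg t'))" if "y = tval U \<rho> t'" for w y \<rho>
      using less that by (simp add: zU_def neg_pl)
    have "Dx m (pl (zU a u) (tval U \<sigma> t')) \<longleftrightarrow> Dx m (pl (mU (nat (- a)) u) (tval U \<sigma> (Neg t')))"
      using Dx_neg[of m "pl (zU a u) (tval U \<sigma> t')"] e1[of "tval U \<sigma> t'" \<sigma> u] by simp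
    moreover have "Dx m (pl (zU a v) (tval U \<tau> t')) \<longleftrightarrow> Dx m (pl (mU (nat (- a)) v) (tval U \<tau> (Neg t')))"
      using Dx_neg[of m "pl (zU a v) (tval U \<tau> t')"] e1[of "tval U \<tau> t'" \<tau> v] by simp
    moreover have "1 \<le> nat (- a)" using less by simp
    moreover have "tvars (Neg t') \<subseteq> V" using t'V by simp
    ultimately show ?thesis unfolding ys yt using Dc[OF m] by metis
  qed
qed

lemma extA:
  assumes g: "good \<sigma> \<tau> V" and x: "x \<notin> V" and m: "1 \<le> m" and t0: "tvars t0 \<subseteq> V"
    and u: "mU m u = tval U \<sigma> t0"
  shows "\<exists>v. good (\<sigma>(x := u)) (\<tau>(x := v)) (insert x V)"
proof -
  have "cg m 0 (tval U \<sigma> t0)" using u cong_mU m by (metis less_le_trans zero_less_one)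
  then have "cg m 0 (tval U \<tau> t0)" using goodD(1)[OF g t0] by blast
  then obtain v where v: "mU m v = tval U \<tau> t0" using cong_zero_iff m by (metis less_le_trans zero_less_one)
  have key: "mU m (tval U (\<rho>(x := w)) t) = tval U \<rho> (Add (zmulT (coefx x t) t0) (mulT m (restx x t)))"
    if "mU m w = tval U \<rho> t0" for \<rho> w t
  proof -
    have "mU m (tval U (\<rho>(x := w)) t) = mU m (pl (zU (coefx x t) w) (tval U \<rho> (restx x t)))"
      using decompU[of "\<rho>(x := w)" t x] by (simp add: tval_restx_upd)
    also have "\<dots> = pl (zU (coefx x t) (mU m w)) (mU m (tval U \<rho> (restx x t)))"
      by (simp add: mU_pl mU_zU) (metis zU_mult zU_nat mult.commute)
    also have "\<dots> = tval U \<rho> (Add (zmulT (coefx x t) t0) (mulT m (restx x t)))"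
      using that by simp
    finally show ?thesis .
  qed
  have "good (\<sigma>(x := u)) (\<tau>(x := v)) (insert x V)"
  proof (rule goodI)
    fix t assume tv: "tvars t \<subseteq> insert x V"
    define t'' where "t'' = Add (zmulT (coefx x t) t0) (mulT m (restx x t))"
    have t''V: "tvars t'' \<subseteq> V" using tv t0 by (auto simp: t''_def)
    have ks: "mU m (tval U (\<sigma>(x := u)) t) = tval U \<sigma> t''" using key[OF u] by (simp add: t''_def)
    have kt: "mU m (tval U (\<tau>(x := v)) t) = tval U \<tau> t''" using key[OF v] by (simp add: t''_def)
    show "cg k j (tval U (\<sigma>(x := u)) t) \<longleftrightarrow> cg k j (tval U (\<tau>(x := v)) t)" for k j
      using cong_scale[OF m, of k j] ks kt goodD(1)[OF g t''V] by metis
    show "tval U (\<sigma>(x := u)) t = zr \<longleftrightarrow> tval U (\<tau>(x := v)) t = zr"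
      using ks kt goodD(2)[OF g t''V] m by (metis mU_inj mU_zr)
    show "Dx m' (tval U (\<sigma>(x := u)) t) \<longleftrightarrow> Dx m' (tval U (\<tau>(x := v)) t)" if "1 \<le> m'" for m'
    proof -
      have "1 \<le> m * m'" using m that by simp
      then show ?thesis using Dx_scale[OF m, of m'] ks kt goodD(3)[OF g t''V] by metis
    qed
  qed
  then show ?thesis by blast
qed

end


lemma finite_subsingleton: "(\<And>x y. P x \<Longrightarrow> P y \<Longrightarrow> x = y) \<Longrightarrow> finite {x. P x}"
proof -
  assume h: "\<And>x y. P x \<Longrightarrow> P y \<Longrightarrow> x = y"
  have "{x. P x} \<subseteq> {SOME x. P x}" using h by (auto intro: someI2)
  then show ?thesis using finite_subset by blast
qed

context setting
begin

lemma cong_lin2: assumes "cg k j' y"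
  shows "cg k j (pl (numU n) y) \<longleftrightarrow> cg k j (numU (n + int j'))"
proof -
  have "sat U (FImp (Cong k j' (Var 0))
     (FIff (Cong k j (Add (numT n) (Var 0))) (Cong k j (numT (n + int j'))))) (asg [y])"
  proof (rule transZ)
    fix \<sigma> :: "nat \<Rightarrow> int"
    have key: "\<sigma> 0 mod int k = int j' \<Longrightarrow> (n + \<sigma> 0) mod int k = (n + int j') mod int k"
      by (metis mod_add_right_eq)
    show "sat Zstr (FImp (Cong k j' (Var 0))
     (FIff (Cong k j (Add (numT n) (Var 0))) (Cong k j (numT (n + int j'))))) \<sigma>"
      using key by simp
  qed simp
  then show ?thesis using assms by (auto simp: asg_def)
qed

lemma shift_id:
  assumes "q * m = a * K" "mU m b = pl (numU (int (a * r0))) y"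
  shows "pl (mU a (pl (mU K x) (numU (int r0)))) y = mU m (pl (mU q x) b)"
proof -
  have "mU a (pl (mU K x) (numU (int r0))) = pl (mU (a * K) x) (numU (int (a * r0)))"
    by (simp add: mU_pl mU_mult mU_numU)
  also have "mU (a * K) x = mU m (mU q x)" using assms(1) by (metis mU_mult mult.commute)
  finally have "pl (mU a (pl (mU K x) (numU (int r0)))) y = pl (mU m (mU q x)) (pl (numU (int (a * r0))) y)"
    by (simp add: add_assoc)
  also have "\<dots> = mU m (pl (mU q x) b)" using assms(2) by (simp add: mU_pl)
  finally show ?thesis .
qed

lemma shift_cong:
  assumes "0 < m" "m dvd K"
  shows "cg m 0 (pl (mU a (pl (mU K x) (numU (int r0)))) y) \<longleftrightarrow> cg m 0 (pl (numU (int (a * r0))) y)"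
proof -
  have "mU a (pl (mU K x) (numU (int r0))) = pl (mU (a * K) x) (numU (int (a * r0)))"
    by (simp add: mU_pl mU_mult mU_numU)
  then have "pl (mU a (pl (mU K x) (numU (int r0)))) y = pl (mU (a * K) x) (pl (numU (int (a * r0))) y)"
    by (simp add: add_assoc)
  then show ?thesis using cong_shift[OF assms] by simp
qed

lemma b_eq:
  assumes "1 \<le> m1" "1 \<le> m2" "a1 * m2 = a2 * m1"
    "mU m1 b1 = pl (numU (int (a1 * r0))) y1" "mU m2 b2 = pl (numU (int (a2 * r0))) y2"
  shows "b1 = b2 \<longleftrightarrow> mU m2 y1 = mU m1 y2"
proof -
  have "mU (m1 * m2) b1 = pl (numU (int (m2 * (a1 * r0)))) (mU m2 y1)"
    using assms(4) by (metis mU_mult mult.commute mU_pl mU_numU of_nat_mult)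
  moreover have "mU (m1 * m2) b2 = pl (numU (int (m1 * (a2 * r0)))) (mU m1 y2)"
    using assms(5) by (metis mU_mult mU_pl mU_numU of_nat_mult)
  moreover have "m2 * (a1 * r0) = m1 * (a2 * r0)" using assms(3) by (metis mult.assoc mult.commute)
  moreover have "1 \<le> m1 * m2" using assms(1,2) by simp
  ultimately show ?thesis by (metis add_cancel_left mU_inj)
qed

end


context setting
begin

lemma fs:
  fixes CS :: "(nat \<times> nat \<times> nat \<times> tm) set" and KS :: "(nat \<times> nat) set" and YS :: "(nat \<times> 'b) set"
    and \<sigma>s \<tau>s :: "nat \<Rightarrow> nat \<Rightarrow> 'b" and I :: "nat set"
  assumes good: "\<forall>i\<in>I. good (\<sigma>s i) (\<tau>s i) (Vs i)"
    and gen: "\<forall>i\<in>I. generic (\<sigma>s i) (Vs i) u"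
    and cons: "\<forall>i\<in>I. \<forall>i'\<in>I. \<forall>t t' p q. tvars t \<subseteq> Vs i \<longrightarrow> tvars t' \<subseteq> Vs i' \<longrightarrow> 1 \<le> p \<longrightarrow> 1 \<le> q \<longrightarrow>
        mU p (tval U (\<tau>s i) t) = mU q (tval U (\<tau>s i') t') \<longrightarrow> mU p (tval U (\<sigma>s i) t) = mU q (tval U (\<sigma>s i') t')"
    and KS: "finite KS" "\<forall>p\<in>KS. cg (fst p) (snd p) u"
    and YS: "finite YS" "\<forall>p\<in>YS. 1 \<le> fst p"
    and CS: "finite CS" "\<forall>c\<in>CS. fst c \<in> I \<and> tvars (snd (snd (snd c))) \<subseteq> Vs (fst c) \<and> 1 \<le> fst (snd c) \<and> 1 \<le> fst (snd (snd c))"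
  shows "\<exists>v. (\<forall>p\<in>KS. cg (fst p) (snd p) v) \<and> (\<forall>p\<in>YS. mU (fst p) v \<noteq> snd p) \<and>
     (\<forall>c\<in>CS. Dx (fst (snd c)) (pl (mU (fst (snd (snd c))) v) (tval U (\<tau>s (fst c)) (snd (snd (snd c))))) \<longleftrightarrow>
              Dx (fst (snd c)) (pl (mU (fst (snd (snd c))) u) (tval U (\<sigma>s (fst c)) (snd (snd (snd c))))))"
proof -
  define cM :: "nat \<times> nat \<times> nat \<times> tm \<Rightarrow> nat" where "cM c = fst (snd c)" for c
  define cA :: "nat \<times> nat \<times> nat \<times> tm \<Rightarrow> nat" where "cA c = fst (snd (snd c))" for c
  define cT :: "nat \<times> nat \<times> nat \<times> tm \<Rightarrow> tm" where "cT c = snd (snd (snd c))" for c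
  define lt where "lt c = tval U (\<tau>s (fst c)) (cT c)" for c
  define ls where "ls c = tval U (\<sigma>s (fst c)) (cT c)" for c
  have CS': "\<And>c. c \<in> CS \<Longrightarrow> fst c \<in> I \<and> tvars (cT c) \<subseteq> Vs (fst c) \<and> 1 \<le> cM c \<and> 1 \<le> cA c"
    using CS(2) by (simp add: cM_def cA_def cT_def)
  define K where "K = (\<Prod>p\<in>KS. fst p) * (\<Prod>c\<in>CS. cM c)"
  have Kpos: "0 < K"
  proof -
    have "0 < (\<Prod>p\<in>KS. fst p)" using KS cong_range by (intro prod_pos) blast
    moreover have "0 < (\<Prod>c\<in>CS. cM c)" using CS' by (intro prod_pos) fastforce
    ultimately show ?thesis by (simp add: K_def)
  qed
  have kdvd: "fst p dvd K" if "p \<in> KS" for p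
    using that KS(1) unfolding K_def by (intro dvd_mult2 dvd_prodI) auto
  have mdvd: "cM c dvd K" if "c \<in> CS" for c
    using that CS(1) unfolding K_def by (intro dvd_mult dvd_prodI) auto
  obtain r0 where r0: "r0 < K" "cg K r0 u" using cong_exists[OF Kpos] by blast
  obtain u1 where u1: "u = pl (mU K u1) (numU (int r0))" using cong_div[OF Kpos r0(1)] r0(2) by blast
  define dv where "dv c \<longleftrightarrow> cg (cM c) 0 (pl (numU (int (cA c * r0))) (ls c))" for c
  define \<epsilon> where "\<epsilon> c \<longleftrightarrow> Dx (cM c) (pl (mU (cA c) u) (ls c))" for c
  define q where "q c = cA c * K div cM c" for c
  define b\<tau> where "b\<tau> c = (SOME b. mU (cM c) b = pl (numU (int (cA c * r0))) (lt c))" for c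
  define b\<sigma> where "b\<sigma> c = (SOME b. mU (cM c) b = pl (numU (int (cA c * r0))) (ls c))" for c
  have numterm: "pl (numU (int n)) (lt c) = tval U (\<tau>s (fst c)) (Add (numT (int n)) (cT c))"
    "pl (numU (int n)) (ls c) = tval U (\<sigma>s (fst c)) (Add (numT (int n)) (cT c))" for n c
    by (simp_all add: lt_def ls_def)
  have dv_tau: "cg k j (pl (numU (int n)) (lt c)) \<longleftrightarrow> cg k j (pl (numU (int n)) (ls c))" if "c \<in> CS" for k j n c
  proof -
    have "tvars (Add (numT (int n)) (cT c)) \<subseteq> Vs (fst c)" using CS'[OF that] by simp
    then show ?thesis unfolding numterm using goodD(1) good CS'[OF that] by blast
  qed
  have hb\<tau>: "mU (cM c) (b\<tau> c) = pl (numU (int (cA c * r0))) (lt c)" if "c \<in> CS" "dv c" for c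
  proof -
    have "cg (cM c) 0 (pl (numU (int (cA c * r0))) (lt c))" using that dv_tau dv_def by blast
    then have "\<exists>b. mU (cM c) b = pl (numU (int (cA c * r0))) (lt c)"
      using cong_zero_iff CS'[OF that(1)] by (metis less_le_trans zero_less_one)
    then show ?thesis unfolding b\<tau>_def by (rule someI_ex)
  qed
  have hb\<sigma>: "mU (cM c) (b\<sigma> c) = pl (numU (int (cA c * r0))) (ls c)" if "c \<in> CS" "dv c" for c
  proof -
    have "\<exists>b. mU (cM c) b = pl (numU (int (cA c * r0))) (ls c)"
      using that cong_zero_iff CS'[OF that(1)] dv_def by (metis less_le_trans zero_less_one)
    then show ?thesis unfolding b\<sigma>_def by (rule someI_ex)
  qed
  have qm: "q c * cM c = cA c * K" if "c \<in> CS" for c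
    using mdvd[OF that] unfolding q_def by (simp add: dvd_div_mult_self dvd_mult)
  have qpos: "1 \<le> q c" if "c \<in> CS" for c
  proof -
    have "0 < cA c * K" using CS'[OF that] Kpos by simp
    then have "0 < q c * cM c" using qm[OF that] by simp
    then show ?thesis by (simp add: Suc_le_eq)
  qed
  have \<epsilon>_iff: "\<epsilon> c \<longleftrightarrow> s_P U (pl (mU (q c) u1) (b\<sigma> c))" if "c \<in> CS" "dv c" for c
  proof -
    have "pl (mU (cA c) u) (ls c) = mU (cM c) (pl (mU (q c) u1) (b\<sigma> c))"
      using shift_id[OF qm[OF that(1)] hb\<sigma>[OF that]] u1 by simp
    then show ?thesis unfolding \<epsilon>_def using Dx_mU CS'[OF that(1)] by simp
  qed
  have \<epsilon>_dv: "dv c" if "c \<in> CS" "\<epsilon> c" for c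
  proof -
    have "cg (cM c) 0 (pl (mU (cA c) u) (ls c))" using that Dx_cong CS' \<epsilon>_def by blast
    then show ?thesis unfolding dv_def using shift_cong[OF _ mdvd[OF that(1)], of "cA c" u1 r0 "ls c"] u1 CS'[OF that(1)]
      by simp
  qed
  obtain cl where cl: "set cl = CS" using finite_list[OF CS(1)] by blast
  define Pl where "Pl = filter (\<lambda>c. dv c \<and> \<epsilon> c) cl"
  define Nl where "Nl = filter (\<lambda>c. dv c \<and> \<not> \<epsilon> c) cl"
  define ms where "ms = map q Pl"
  define ms' where "ms' = map q Nl"
  define bs where "bs = map b\<tau> Pl"
  define bs' where "bs' = map b\<tau> Nl"
  have Pl_in: "Pl ! i \<in> CS \<and> dv (Pl ! i) \<and> \<epsilon> (Pl ! i)" if "i < length Pl" for i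
    using that nth_mem[OF that] cl unfolding Pl_def by auto
  have Nl_in: "Nl ! i \<in> CS \<and> dv (Nl ! i) \<and> \<not> \<epsilon> (Nl ! i)" if "i < length Nl" for i
    using that nth_mem[OF that] cl unfolding Nl_def by auto
  have ms1: "\<forall>m\<in>set ms. 1 \<le> m" using qpos cl by (auto simp: ms_def Pl_def)
  have ms1': "\<forall>m\<in>set ms'. 1 \<le> m" using qpos cl by (auto simp: ms'_def Nl_def)
  obtain Dl where Dl: "finite Dl" "\<forall>k\<in>Dl. 0 < k"
    and P3U: "\<forall>k\<in>Dl. \<exists>F. finite F \<and> (\<forall>x. s_P U x \<and> cg k 0 x \<longrightarrow> (\<exists>n\<in>F. x = numU n))"
    and main: "\<forall>bs bs' ys. length bs = length ms \<and> length bs' = length ms' \<and>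
        (\<forall>i<length ms. \<forall>j<length ms'. (ms ! i, bs ! i) \<noteq> (ms' ! j, bs' ! j)) \<longrightarrow>
        (\<exists>x. x \<notin> set ys \<and> (\<forall>i<length ms. s_P U (pl (mU (ms ! i) x) (bs ! i))) \<and>
             (\<forall>j<length ms'. \<not> s_P U (pl (mU (ms' ! j) x) (bs' ! j)))) \<or>
        (\<exists>k\<in>Dl. \<forall>s<k. \<exists>i<length ms. cg k 0 (pl (mU (ms ! i * s) on) (bs ! i)))"
    using randU[OF ms1 ms1'] by blast
  define Xb where "Xb = {x. \<exists>p\<in>YS. mU (fst p) (pl (mU K x) (numU (int r0))) = snd p}"
  have "finite Xb"
  proof -
    have "Xb = (\<Union>p\<in>YS. {x. mU (fst p) (pl (mU K x) (numU (int r0))) = snd p})" by (auto simp: Xb_def)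
    moreover have "finite {x. mU (fst p) (pl (mU K x) (numU (int r0))) = snd p}" if "p \<in> YS" for p
    proof (rule finite_subsingleton)
      fix x y assume "mU (fst p) (pl (mU K x) (numU (int r0))) = snd p" "mU (fst p) (pl (mU K y) (numU (int r0))) = snd p"
      then have "mU (fst p) (pl (mU K x) (numU (int r0))) = mU (fst p) (pl (mU K y) (numU (int r0)))" by simp
      then have "pl (mU K x) (numU (int r0)) = pl (mU K y) (numU (int r0))" using YS(2) that by simp
      then have "mU K x = mU K y" by (metis add_cancel_left add_comm)
      then show "x = y" using Kpos by simp
    qed
    ultimately show ?thesis using YS(1) by simp
  qed
  then obtain ys where ys: "set ys = Xb" using finite_list by blast
  have dist: "\<forall>i<length ms. \<forall>j<length ms'. (ms ! i, bs ! i) \<noteq> (ms' ! j, bs' ! j)"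
  proof (intro allI impI notI)
    fix i j assume i: "i < length ms" and j: "j < length ms'" and eq: "(ms ! i, bs ! i) = (ms' ! j, bs' ! j)"
    define c1 where "c1 = Pl ! i"
    define c2 where "c2 = Nl ! j"
    have c1: "c1 \<in> CS" "dv c1" "\<epsilon> c1" using Pl_in i by (auto simp: c1_def ms_def)
    have c2: "c2 \<in> CS" "dv c2" "\<not> \<epsilon> c2" using Nl_in j by (auto simp: c2_def ms'_def)
    have qe: "q c1 = q c2" and be: "b\<tau> c1 = b\<tau> c2"
      using eq i j by (auto simp: c1_def c2_def ms_def ms'_def bs_def bs'_def)
    have am: "cA c1 * cM c2 = cA c2 * cM c1"
    proof -
      have "cA c1 * K * cM c2 = cA c2 * K * cM c1"
        using qm[OF c1(1)] qm[OF c2(1)] qe by (metis mult.assoc mult.commute)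
      then show ?thesis using Kpos by (metis mult.assoc mult.commute mult_cancel_left neq0_conv)
    qed
    have m1: "1 \<le> cM c1" and m2: "1 \<le> cM c2" using CS' c1(1) c2(1) by auto
    have "mU (cM c2) (lt c1) = mU (cM c1) (lt c2)"
      using b_eq[OF m1 m2 am hb\<tau>[OF c1(1,2)] hb\<tau>[OF c2(1,2)]] be by simp
    then have "mU (cM c2) (ls c1) = mU (cM c1) (ls c2)"
      using cons CS'[OF c1(1)] CS'[OF c2(1)] unfolding lt_def ls_def by blast
    then have "b\<sigma> c1 = b\<sigma> c2"
      using b_eq[OF m1 m2 am hb\<sigma>[OF c1(1,2)] hb\<sigma>[OF c2(1,2)]] by simp
    then have "\<epsilon> c1 = \<epsilon> c2" using \<epsilon>_iff c1 c2 qe by simp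
    then show False using c1 c2 by simp
  qed
  have lens: "length bs = length ms" "length bs' = length ms'" by (auto simp: bs_def ms_def bs'_def ms'_def)
  from main[rule_format, OF conjI[OF lens(1) conjI[OF lens(2) dist]], of ys]
  show ?thesis
  proof
    assume "\<exists>x. x \<notin> set ys \<and> (\<forall>i<length ms. s_P U (pl (mU (ms ! i) x) (bs ! i))) \<and>
             (\<forall>j<length ms'. \<not> s_P U (pl (mU (ms' ! j) x) (bs' ! j)))"
    then obtain x where x: "x \<notin> set ys" "\<forall>i<length ms. s_P U (pl (mU (ms ! i) x) (bs ! i))"
      "\<forall>j<length ms'. \<not> s_P U (pl (mU (ms' ! j) x) (bs' ! j))" by blast
    define v where "v = pl (mU K x) (numU (int r0))"
    have "\<forall>p\<in>KS. cg (fst p) (snd p) v"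
    proof
      fix p assume p: "p \<in> KS"
      have "cg K r0 v" unfolding v_def using cong_base[OF Kpos r0(1)] .
      then have "cg (fst p) (r0 mod fst p) v" using cong_dvd kdvd[OF p] by blast
      moreover have "cg (fst p) (r0 mod fst p) u" using cong_dvd kdvd[OF p] r0(2) by blast
      moreover have "cg (fst p) (snd p) u" using KS(2) p by blast
      ultimately show "cg (fst p) (snd p) v" using cong_unique by metis
    qed
    moreover have "\<forall>p\<in>YS. mU (fst p) v \<noteq> snd p"
      using x(1) ys unfolding Xb_def v_def by blast
    moreover have "Dx (cM c) (pl (mU (cA c) v) (lt c)) \<longleftrightarrow> \<epsilon> c" if c: "c \<in> CS" for c
    proof (cases "dv c")
      case True
      have "pl (mU (cA c) v) (lt c) = mU (cM c) (pl (mU (q c) x) (b\<tau> c))"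
        unfolding v_def using shift_id[OF qm[OF c] hb\<tau>[OF c True]] by simp
      then have e1: "Dx (cM c) (pl (mU (cA c) v) (lt c)) \<longleftrightarrow> s_P U (pl (mU (q c) x) (b\<tau> c))"
        using Dx_mU CS'[OF c] by simp
      show ?thesis
      proof (cases "\<epsilon> c")
        case True
        then have "c \<in> set Pl" using c cl \<open>dv c\<close> by (simp add: Pl_def)
        then obtain i where i: "i < length Pl" "Pl ! i = c" by (auto simp: in_set_conv_nth)
        then show ?thesis using x(2) e1 True by (auto simp: ms_def bs_def)
      next
        case False
        then have "c \<in> set Nl" using c cl \<open>dv c\<close> by (simp add: Nl_def)
        then obtain i where i: "i < length Nl" "Nl ! i = c" by (auto simp: in_set_conv_nth)
        then show ?thesis using x(3) e1 False by (auto simp: ms'_def bs'_def)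
      qed
    next
      case False
      have "\<not> Dx (cM c) (pl (mU (cA c) v) (lt c))"
      proof
        assume "Dx (cM c) (pl (mU (cA c) v) (lt c))"
        then have "cg (cM c) 0 (pl (mU (cA c) v) (lt c))" using Dx_cong CS'[OF c] by blast
        then have "cg (cM c) 0 (pl (numU (int (cA c * r0))) (lt c))"
          unfolding v_def using shift_cong[OF _ mdvd[OF c]] CS'[OF c] by simp
        then show False using False dv_tau[OF c] dv_def by blast
      qed
      moreover have "\<not> \<epsilon> c" using False \<epsilon>_dv c by blast
      ultimately show ?thesis by blast
    qed
    ultimately show ?thesis unfolding cM_def cA_def cT_def lt_def \<epsilon>_def ls_def by blast
  next
    assume "\<exists>k\<in>Dl. \<forall>s<k. \<exists>i<length ms. cg k 0 (pl (mU (ms ! i * s) on) (bs ! i))"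
    then obtain k where k: "k \<in> Dl" "\<forall>s<k. \<exists>i<length ms. cg k 0 (pl (mU (ms ! i * s) on) (bs ! i))" by blast
    have kpos: "0 < k" using Dl k by blast
    obtain s where s: "s < k" "cg k s u1" using cong_exists[OF kpos] by blast
    obtain i where i: "i < length ms" "cg k 0 (pl (mU (ms ! i * s) on) (bs ! i))" using k s by blast
    define c where "c = Pl ! i"
    have c: "c \<in> CS" "dv c" "\<epsilon> c" using Pl_in i by (auto simp: c_def ms_def)
    have ci: "ms ! i = q c" "bs ! i = b\<tau> c" using i by (auto simp: c_def ms_def bs_def)
    obtain j' where j': "j' < k" "cg k j' (b\<tau> c)" using cong_exists[OF kpos] by blast
    have m1: "1 \<le> cM c" using CS'[OF c(1)] by simp
    have "cg k 0 (pl (numU (int (q c * s))) (b\<tau> c))"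
      using i ci by (metis numU_def zU_nat)
    then have A: "cg k 0 (numU (int (q c * s) + int j'))" using cong_lin2[OF j'(2)] by simp
    have "cg (cM c * k) (cM c * j') (mU (cM c) (b\<tau> c))" using cong_scale[OF m1] j'(2) by blast
    then have "cg (cM c * k) (cM c * j') (mU (cM c) (b\<sigma> c))"
      using hb\<tau>[OF c(1,2)] hb\<sigma>[OF c(1,2)] dv_tau[OF c(1)] by metis
    then have B: "cg k j' (b\<sigma> c)" using cong_scale[OF m1] by blast
    have "cg k 0 (pl (zU (int (q c)) u1) (b\<sigma> c))"
      using cong_lin[OF s(2) B, of 0 "int (q c)"] A by simp
    then have w0: "cg k 0 (pl (mU (q c) u1) (b\<sigma> c))" by (simp only: zU_nat)
    have w1: "s_P U (pl (mU (q c) u1) (b\<sigma> c))" using \<epsilon>_iff c by blast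
    obtain n where n: "pl (mU (q c) u1) (b\<sigma> c) = numU n"
      using P3U k(1) w0 w1 by blast
    have "pl (mU (cA c) u) (ls c) = mU (cM c) (pl (mU (q c) u1) (b\<sigma> c))"
      using shift_id[OF qm[OF c(1)] hb\<sigma>[OF c(1,2)]] u1 by simp
    also have "\<dots> = numU (int (cM c) * n)" using n by (simp add: mU_numU)
    finally have "mU (cA c) u = pl (numU (int (cM c) * n)) (ng (ls c))"
      by (metis add_assoc add_neg add_zero)
    then have "mU (cA c) u = tval U (\<sigma>s (fst c)) (Add (numT (int (cM c) * n)) (Neg (cT c)))"
      by (simp add: ls_def)
    moreover have "tvars (Add (numT (int (cM c) * n)) (Neg (cT c))) \<subseteq> Vs (fst c)" using CS'[OF c(1)] by simp
    moreover have "1 \<le> cA c" "fst c \<in> I" using CS'[OF c(1)] by auto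
    ultimately show ?thesis using gen unfolding generic_def by blast
  qed
qed

end


context setting
begin

definition patf :: "nat \<Rightarrow> nat \<Rightarrow> fm" where
  "patf m a = Ex 2 (Conj (Eq (mulT m (Var 2)) (Add (mulT a (Var 0)) (Var 1))) (Pr (Var 2)))"

lemma sat_patf: "sat U (patf m a) \<rho> \<longleftrightarrow> Dx m (pl (mU a (\<rho> 0)) (\<rho> 1))"
  by (auto simp: patf_def Dx_def)

lemma fv_patf: "fv (patf m a) \<subseteq> {0, 1}"
  by (auto simp: patf_def split: if_splits)

lemma small_countable: "countable A \<Longrightarrow> small_wrt A B"
  unfolding small_wrt_def
  by (rule exI[of _ "Inr \<circ> to_nat_on A"]) (auto intro!: comp_inj_on inj_on_to_nat_on)

lemma real:
  fixes \<sigma>s \<tau>s :: "nat \<Rightarrow> nat \<Rightarrow> 'b" and I :: "nat set"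
  assumes good: "\<forall>i\<in>I. good (\<sigma>s i) (\<tau>s i) (Vs i)"
    and gen: "\<forall>i\<in>I. generic (\<sigma>s i) (Vs i) u"
    and cons: "\<forall>i\<in>I. \<forall>i'\<in>I. \<forall>t t' p q. tvars t \<subseteq> Vs i \<longrightarrow> tvars t' \<subseteq> Vs i' \<longrightarrow> 1 \<le> p \<longrightarrow> 1 \<le> q \<longrightarrow>
        mU p (tval U (\<tau>s i) t) = mU q (tval U (\<tau>s i') t') \<longrightarrow> mU p (tval U (\<sigma>s i) t) = mU q (tval U (\<sigma>s i') t')"
  shows "\<exists>v. (\<forall>k j. cg k j v \<longleftrightarrow> cg k j u) \<and> (\<forall>i\<in>I. generic (\<tau>s i) (Vs i) v) \<and>
     (\<forall>i\<in>I. \<forall>m a t. tvars t \<subseteq> Vs i \<longrightarrow> 1 \<le> m \<longrightarrow> 1 \<le> a \<longrightarrow>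
        (Dx m (pl (mU a v) (tval U (\<tau>s i) t)) \<longleftrightarrow> Dx m (pl (mU a u) (tval U (\<sigma>s i) t))))"
proof -
  define A where "A = (\<lambda>p. tval U (\<tau>s (fst p)) (snd p)) ` (I \<times> (UNIV :: tm set))"
  have cI: "countable I" by (rule countable_subset[OF subset_UNIV countableI_type])
  have "countable (I \<times> (UNIV :: tm set))" using cI countable_tm by (rule countable_SIGMA)
  then have cA: "countable A" unfolding A_def by (rule countable_image)
  have small: "small_wrt A B" by (rule small_countable[OF cA])
  define z0 :: "nat \<Rightarrow> 'b" where "z0 = (\<lambda>_. zr)"
  define g1 :: "nat \<times> nat \<Rightarrow> fm \<times> (nat \<Rightarrow> 'b)" where "g1 p = (Cong (fst p) (snd p) (Var 0), z0)" for p
  define g2 :: "nat \<times> 'b \<Rightarrow> fm \<times> (nat \<Rightarrow> 'b)" where "g2 p = (Not (Eq (mulT (fst p) (Var 0)) (Var 1)), z0(1 := snd p))" for p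
  define g3 :: "nat \<times> nat \<times> nat \<times> tm \<Rightarrow> fm \<times> (nat \<Rightarrow> 'b)" where
    "g3 c = (if Dx (fst (snd c)) (pl (mU (fst (snd (snd c))) u) (tval U (\<sigma>s (fst c)) (snd (snd (snd c)))))
             then patf (fst (snd c)) (fst (snd (snd c))) else Not (patf (fst (snd c)) (fst (snd (snd c)))),
             z0(1 := tval U (\<tau>s (fst c)) (snd (snd (snd c)))))" for c
  define P1 where "P1 = {p :: nat \<times> nat. cg (fst p) (snd p) u}"
  define P2 where "P2 = {p :: nat \<times> 'b. 1 \<le> fst p \<and> snd p \<in> A}"
  define P3 where "P3 = {c :: nat \<times> nat \<times> nat \<times> tm. fst c \<in> I \<and> tvars (snd (snd (snd c))) \<subseteq> Vs (fst c) \<and>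
     1 \<le> fst (snd c) \<and> 1 \<le> fst (snd (snd c))}"
  define \<Sigma> where "\<Sigma> = g1 ` P1 \<union> g2 ` P2 \<union> g3 ` P3"
  have params: "\<forall>(\<phi>, \<sigma>)\<in>\<Sigma>. \<forall>v\<in>fv \<phi> - {0}. \<sigma> v \<in> A"
  proof -
    have "\<forall>v\<in>fv \<phi> - {0}. \<sigma> v \<in> A" if mem: "(\<phi>, \<sigma>) \<in> \<Sigma>" for \<phi> \<sigma>
    proof -
      consider (a) p where "p \<in> P1" "(\<phi>, \<sigma>) = g1 p" | (b) p where "p \<in> P2" "(\<phi>, \<sigma>) = g2 p"
        | (c) c where "c \<in> P3" "(\<phi>, \<sigma>) = g3 c"
        using mem unfolding \<Sigma>_def by blast
      then show ?thesis
      proof cases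
        case a then show ?thesis by (auto simp: g1_def)
      next
        case b then show ?thesis by (auto simp: g2_def P2_def split: if_splits)
      next
        case c
        have "tval U (\<tau>s (fst c)) (snd (snd (snd c))) \<in> A"
          using c(1) unfolding A_def P3_def by (auto intro!: image_eqI[of _ _ "(fst c, snd (snd (snd c)))"])
        moreover have "fv \<phi> \<subseteq> {0, 1}" using c(2) fv_patf unfolding g3_def by (auto split: if_splits)
        moreover have "\<sigma> 1 = tval U (\<tau>s (fst c)) (snd (snd (snd c)))" using c(2) by (auto simp: g3_def)
        ultimately show ?thesis by auto
      qed
    qed
    then show ?thesis by blast
  qed
  have finsat: "\<exists>c. \<forall>(\<phi>, \<sigma>)\<in>F. sat U \<phi> (\<sigma>(0 := c))" if F: "F \<subseteq> \<Sigma>" "finite F" for F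
  proof -
    have s1: "F \<inter> g1 ` P1 \<subseteq> g1 ` P1" by (rule Int_lower2)
    have f1: "finite (F \<inter> g1 ` P1)" using F(2) by (intro finite_Int disjI1)
    obtain C1 where C1: "C1 \<subseteq> P1" "finite C1" "F \<inter> g1 ` P1 = g1 ` C1"
      using finite_subset_image[OF f1 s1] by blast
    have s2: "F \<inter> g2 ` P2 \<subseteq> g2 ` P2" by (rule Int_lower2)
    have f2: "finite (F \<inter> g2 ` P2)" using F(2) by (intro finite_Int disjI1)
    obtain C2 where C2: "C2 \<subseteq> P2" "finite C2" "F \<inter> g2 ` P2 = g2 ` C2"
      using finite_subset_image[OF f2 s2] by blast
    have s3: "F \<inter> g3 ` P3 \<subseteq> g3 ` P3" by (rule Int_lower2)
    have f3: "finite (F \<inter> g3 ` P3)" using F(2) by (intro finite_Int disjI1)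
    obtain C3 where C3: "C3 \<subseteq> P3" "finite C3" "F \<inter> g3 ` P3 = g3 ` C3"
      using finite_subset_image[OF f3 s3] by blast
    have "F = F \<inter> \<Sigma>" using F(1) by (rule Int_absorb2[symmetric])
    also have "\<dots> = (F \<inter> g1 ` P1) \<union> (F \<inter> g2 ` P2) \<union> (F \<inter> g3 ` P3)"
      unfolding \<Sigma>_def by (simp only: Int_Un_distrib)
    finally have FC: "F \<subseteq> g1 ` C1 \<union> g2 ` C2 \<union> g3 ` C3" using C1(3) C2(3) C3(3) by simp
    obtain c where c1: "\<forall>p\<in>C1. cg (fst p) (snd p) c" and c2: "\<forall>p\<in>C2. mU (fst p) c \<noteq> snd p"
      and c3: "\<forall>x\<in>C3. Dx (fst (snd x)) (pl (mU (fst (snd (snd x))) c) (tval U (\<tau>s (fst x)) (snd (snd (snd x))))) \<longleftrightarrow>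
              Dx (fst (snd x)) (pl (mU (fst (snd (snd x))) u) (tval U (\<sigma>s (fst x)) (snd (snd (snd x)))))"
    proof -
      have k1: "\<forall>p\<in>C1. cg (fst p) (snd p) u" using C1(1) unfolding P1_def by blast
      have k2: "\<forall>p\<in>C2. 1 \<le> fst p" using C2(1) unfolding P2_def by blast
      have k3: "\<forall>c\<in>C3. fst c \<in> I \<and> tvars (snd (snd (snd c))) \<subseteq> Vs (fst c) \<and> 1 \<le> fst (snd c) \<and> 1 \<le> fst (snd (snd c))"
        using C3(1) unfolding P3_def by blast
      show ?thesis using fs[OF good gen cons C1(2) k1 C2(2) k2 C3(2) k3] that by blast
    qed
    have "sat U \<phi> (\<sigma>(0 := c))" if mem: "(\<phi>, \<sigma>) \<in> F" for \<phi> \<sigma>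
    proof -
      consider (a) p where "p \<in> C1" "(\<phi>, \<sigma>) = g1 p" | (b) p where "p \<in> C2" "(\<phi>, \<sigma>) = g2 p"
        | (c) x where "x \<in> C3" "(\<phi>, \<sigma>) = g3 x"
        using mem FC by blast
      then show ?thesis
      proof cases
        case a then show ?thesis using c1 by (auto simp: g1_def)
      next
        case b then show ?thesis using c2 by (auto simp: g2_def)
      next
        case c then show ?thesis using c3 by (auto simp: g3_def sat_patf)
      qed
    qed
    then show ?thesis by blast
  qed
  obtain v where v: "\<forall>(\<phi>, \<sigma>)\<in>\<Sigma>. sat U \<phi> (\<sigma>(0 := v))"
    using sat_U[unfolded saturated_for_def, rule_format, of A \<Sigma>] small params finsat by blast
  have v1: "cg k j v" if "cg k j u" for k j
  proof -
    have "g1 (k, j) \<in> \<Sigma>" using that unfolding \<Sigma>_def P1_def by auto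
    then show ?thesis using v by (auto simp: g1_def)
  qed
  have "cg k j v \<longleftrightarrow> cg k j u" for k j
  proof
    assume h: "cg k j v"
    then have k: "0 < k" using cong_range by blast
    obtain r where "r < k" "cg k r u" using cong_exists[OF k] by blast
    then show "cg k j u" using v1 h cong_unique by metis
  qed (rule v1)
  moreover have "generic (\<tau>s i) (Vs i) v" if i: "i \<in> I" for i
    unfolding generic_def
  proof (intro allI impI)
    fix m :: nat and t assume m: "1 \<le> m" and t: "tvars t \<subseteq> Vs i"
    have "tval U (\<tau>s i) t \<in> A" unfolding A_def using i by (auto intro!: image_eqI[of _ _ "(i, t)"])
    then have "g2 (m, tval U (\<tau>s i) t) \<in> \<Sigma>" using m unfolding \<Sigma>_def P2_def by auto
    then show "mU m v \<noteq> tval U (\<tau>s i) t" using v by (auto simp: g2_def)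
  qed
  moreover have "Dx m (pl (mU a v) (tval U (\<tau>s i) t)) \<longleftrightarrow> Dx m (pl (mU a u) (tval U (\<sigma>s i) t))"
    if "i \<in> I" "tvars t \<subseteq> Vs i" "1 \<le> m" "1 \<le> a" for i m a :: nat and t
  proof -
    have "g3 (i, m, a, t) \<in> \<Sigma>" using that unfolding \<Sigma>_def P3_def by auto
    then have "sat U (fst (g3 (i, m, a, t))) ((snd (g3 (i, m, a, t)))(0 := v))" using v by auto
    then show ?thesis by (auto simp: g3_def sat_patf split: if_splits)
  qed
  ultimately show ?thesis by blast
qed

lemma extend:
  assumes g: "good \<sigma> \<tau> V" and x: "x \<notin> V"
  shows "\<exists>v. good (\<sigma>(x := u)) (\<tau>(x := v)) (insert x V)"
proof (cases "generic \<sigma> V u")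
  case False
  then obtain m t0 where "1 \<le> m" "tvars t0 \<subseteq> V" "mU m u = tval U \<sigma> t0"
    unfolding generic_def by blast
  then show ?thesis using extA[OF g x] by blast
next
  case True
  have cons: "mU p (tval U \<sigma> t) = mU q (tval U \<sigma> t')"
    if "tvars t \<subseteq> V" "tvars t' \<subseteq> V" "mU p (tval U \<tau> t) = mU q (tval U \<tau> t')" for t t' p q
  proof -
    have tv: "tvars (Add (mulT p t) (Neg (mulT q t'))) \<subseteq> V" using that by auto
    have "tval U \<tau> (Add (mulT p t) (Neg (mulT q t'))) = zr" using that(3) eq_iff_diff by simp
    then have "tval U \<sigma> (Add (mulT p t) (Neg (mulT q t'))) = zr" using goodD(2)[OF g tv] by blast
    then show ?thesis using eq_iff_diff[of "mU p (tval U \<sigma> t)" "mU q (tval U \<sigma> t')"] by simp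
  qed
  have g0: "\<forall>i\<in>{0::nat}. good ((\<lambda>_. \<sigma>) i) ((\<lambda>_. \<tau>) i) ((\<lambda>_. V) i)" using g by simp
  have gen0: "\<forall>i\<in>{0::nat}. generic ((\<lambda>_. \<sigma>) i) ((\<lambda>_. V) i) u" using True by simp
  have cons0: "\<forall>i\<in>{0::nat}. \<forall>i'\<in>{0::nat}. \<forall>t t' p q. tvars t \<subseteq> (\<lambda>_. V) i \<longrightarrow> tvars t' \<subseteq> (\<lambda>_. V) i' \<longrightarrow> 1 \<le> p \<longrightarrow> 1 \<le> q \<longrightarrow>
        mU p (tval U ((\<lambda>_. \<tau>) i) t) = mU q (tval U ((\<lambda>_. \<tau>) i') t') \<longrightarrow> mU p (tval U ((\<lambda>_. \<sigma>) i) t) = mU q (tval U ((\<lambda>_. \<sigma>) i') t')"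
    using cons by blast
  obtain v where v1: "\<forall>k j. cg k j v \<longleftrightarrow> cg k j u" and v2': "\<forall>i\<in>{0::nat}. generic ((\<lambda>_. \<tau>) i) ((\<lambda>_. V) i) v"
    and v3': "\<forall>i\<in>{0::nat}. \<forall>m a t. tvars t \<subseteq> (\<lambda>_. V) i \<longrightarrow> 1 \<le> m \<longrightarrow> 1 \<le> a \<longrightarrow>
        (Dx m (pl (mU a v) (tval U ((\<lambda>_. \<tau>) i) t)) \<longleftrightarrow> Dx m (pl (mU a u) (tval U ((\<lambda>_. \<sigma>) i) t)))"
    using real[OF g0 gen0 cons0] by blast
  have v2: "generic \<tau> V v" using v2' by simp
  have v3: "\<And>m a t. 1 \<le> m \<Longrightarrow> 1 \<le> a \<Longrightarrow> tvars t \<subseteq> V \<Longrightarrow>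
        Dx m (pl (mU a v) (tval U \<tau> t)) \<longleftrightarrow> Dx m (pl (mU a u) (tval U \<sigma> t))"
    using v3' by simp
  have "good (\<sigma>(x := u)) (\<tau>(x := v)) (insert x V)"
    by (rule verify[OF g x True v2]) (use v1 v3 in blast)+
  then show ?thesis by blast
qed

lemma bf: "good \<sigma> \<tau> V \<Longrightarrow> fv \<phi> \<subseteq> V \<Longrightarrow> sat U \<phi> \<sigma> \<longleftrightarrow> sat U \<phi> \<tau>"
proof (induction \<phi> arbitrary: \<sigma> \<tau> V)
  case (Eq s t)
  then have tv: "tvars (Add s (Neg t)) \<subseteq> V" by simp
  have "sat U (Eq s t) \<sigma> \<longleftrightarrow> tval U \<sigma> (Add s (Neg t)) = zr" using eq_iff_diff[of "tval U \<sigma> s" "tval U \<sigma> t"] by simp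
  also have "\<dots> \<longleftrightarrow> tval U \<tau> (Add s (Neg t)) = zr" using goodD(2)[OF Eq(1) tv] .
  also have "\<dots> \<longleftrightarrow> sat U (Eq s t) \<tau>" using eq_iff_diff[of "tval U \<tau> s" "tval U \<tau> t"] by simp
  finally show ?case .
next
  case (Cong k j t)
  then show ?case using goodD(1)[OF Cong(1), of t k j] by simp
next
  case (Pr t)
  have tv: "tvars t \<subseteq> V" using Pr by simp
  have "Dx 1 (tval U \<sigma> t) \<longleftrightarrow> Dx 1 (tval U \<tau> t)" by (rule goodD(3)[OF Pr(1) tv]) simp
  then show ?case unfolding Dx_1 by simp
next
  case Bot then show ?case by simp
next
  case (Not p)
  have "sat U p \<sigma> \<longleftrightarrow> sat U p \<tau>" by (rule Not.IH) (use Not.prems in auto)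
  then show ?case by simp
next
  case (Conj p q)
  have "sat U p \<sigma> \<longleftrightarrow> sat U p \<tau>" by (rule Conj.IH(1)) (use Conj.prems in auto)
  moreover have "sat U q \<sigma> \<longleftrightarrow> sat U q \<tau>" by (rule Conj.IH(2)) (use Conj.prems in auto)
  ultimately show ?case by simp
next
  case (Ex v p)
  define V' where "V' = V - {v}"
  have g': "good \<sigma> \<tau> V'" using good_mono[OF Ex.prems(1)] by (auto simp: V'_def)
  have fvp: "fv p \<subseteq> insert v V'" using Ex.prems(2) by (auto simp: V'_def)
  have vV: "v \<notin> V'" by (simp add: V'_def)
  show ?case
  proof
    assume "sat U (Ex v p) \<sigma>"
    then obtain a where a: "sat U p (\<sigma>(v := a))" by auto
    obtain b where b: "good (\<sigma>(v := a)) (\<tau>(v := b)) (insert v V')" using extend[OF g' vV] by blast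
    have "sat U p (\<tau>(v := b))" using Ex.IH[OF b fvp] a by blast
    then show "sat U (Ex v p) \<tau>" by auto
  next
    assume "sat U (Ex v p) \<tau>"
    then obtain b where b: "sat U p (\<tau>(v := b))" by auto
    obtain a where a: "good (\<tau>(v := b)) (\<sigma>(v := a)) (insert v V')" using extend[OF good_sym[OF g'] vV] by blast
    have "sat U p (\<sigma>(v := a))" using Ex.IH[OF good_sym[OF a] fvp] b by blast
    then show "sat U (Ex v p) \<sigma>" by auto
  qed
qed

end


lemma tup_upd: "(tup as a)(0 := c) = tup as c"
  by (auto simp: tup_def fun_eq_iff)

lemma tup_V: "v \<in> {1..length as} \<Longrightarrow> tup as c v = as ! (v - 1)"
  by (auto simp: tup_def)

lemma tval_tup: "tvars t \<subseteq> {1..length as} \<Longrightarrow>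
   tval S (tup as c) t = tval S (\<lambda>v. as ! v) (mapvars (\<lambda>v. v - 1) t)"
  unfolding tval_mapvars by (rule tval_cong) (auto simp: tup_V)

lemma tvars_shift: "tvars t \<subseteq> {1..l} \<Longrightarrow> tvars (mapvars (\<lambda>v. v - 1) t) \<subseteq> {..<l}"
  by (fastforce simp: subset_iff)

context setting
begin

lemma indisc1:
  assumes ind: "indiscernible U B l s" and fv: "fv \<psi> \<subseteq> {..<l}"
  shows "sat U \<psi> (\<lambda>v. s i ! v) \<longleftrightarrow> sat U \<psi> (\<lambda>v. s j ! v)"
proof -
  let ?f = "\<lambda>_::nat. i" and ?g = "\<lambda>_::nat. j" and ?\<beta> = "\<lambda>_::nat. zr"
  have I: "\<forall>n \<psi> \<beta> f g. strict_mono_on {..<n} f \<and> strict_mono_on {..<n} g \<and>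
        (\<forall>v\<in>fv \<psi>. n * l \<le> v \<longrightarrow> \<beta> v \<in> B) \<longrightarrow>
        (sat U \<psi> (seq_asg l n f s \<beta>) \<longleftrightarrow> sat U \<psi> (seq_asg l n g s \<beta>))"
    using ind unfolding indiscernible_def by blast
  have p1: "strict_mono_on {..<1} ?f" "strict_mono_on {..<1} ?g" by (auto simp: strict_mono_on_def)
  have p2: "\<forall>v\<in>fv \<psi>. 1 * l \<le> v \<longrightarrow> ?\<beta> v \<in> B" using fv by auto
  have "sat U \<psi> (seq_asg l 1 ?f s ?\<beta>) \<longleftrightarrow> sat U \<psi> (seq_asg l 1 ?g s ?\<beta>)"
    using I[rule_format, OF conjI[OF p1(1) conjI[OF p1(2) p2]]] .
  moreover have "sat U \<psi> (seq_asg l 1 h s ?\<beta>) \<longleftrightarrow> sat U \<psi> (\<lambda>v. s (h 0) ! v)" for h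
    by (rule sat_cong) (use fv in \<open>auto simp: seq_asg_def\<close>)
  ultimately show ?thesis by simp
qed

lemma indisc2:
  assumes ind: "indiscernible U B l s" and \<alpha>: "tvars \<alpha> \<subseteq> {..<l}" and \<beta>: "tvars \<beta> \<subseteq> {..<l}"
    and ij: "i < j" and ij': "i' < j'"
  shows "tval U (\<lambda>v. s i ! v) \<alpha> = tval U (\<lambda>v. s j ! v) \<beta> \<longleftrightarrow>
         tval U (\<lambda>v. s i' ! v) \<alpha> = tval U (\<lambda>v. s j' ! v) \<beta>"
proof -
  let ?\<psi> = "Eq \<alpha> (mapvars (\<lambda>v. v + l) \<beta>)"
  let ?\<beta>0 = "\<lambda>_::nat. zr"
  have fv: "fv ?\<psi> \<subseteq> {..<2 * l}" using \<alpha> \<beta> by auto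
  have sm: "strict_mono_on {..<2} (\<lambda>k::nat. if k = 0 then a else b)" if "a < b" for a b :: nat
    using that by (auto simp: strict_mono_on_def)
  have ev: "sat U ?\<psi> (seq_asg l 2 (\<lambda>k. if k = 0 then a else b) s ?\<beta>0) \<longleftrightarrow>
     tval U (\<lambda>v. s a ! v) \<alpha> = tval U (\<lambda>v. s b ! v) \<beta>" for a b
  proof -
    have "tval U (seq_asg l 2 (\<lambda>k. if k = 0 then a else b) s ?\<beta>0) \<alpha> = tval U (\<lambda>v. s a ! v) \<alpha>"
      by (rule tval_cong) (use \<alpha> in \<open>auto simp: seq_asg_def\<close>)
    moreover have "tval U (seq_asg l 2 (\<lambda>k. if k = 0 then a else b) s ?\<beta>0) (mapvars (\<lambda>v. v + l) \<beta>) =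
        tval U (\<lambda>v. s b ! v) \<beta>"
      unfolding tval_mapvars by (rule tval_cong) (use \<beta> in \<open>auto simp: seq_asg_def\<close>)
    ultimately show ?thesis by simp
  qed
  have "sat U ?\<psi> (seq_asg l 2 (\<lambda>k. if k = 0 then i else j) s ?\<beta>0) \<longleftrightarrow>
        sat U ?\<psi> (seq_asg l 2 (\<lambda>k. if k = 0 then i' else j') s ?\<beta>0)"
  proof -
    have I: "\<forall>n \<psi> \<beta> f g. strict_mono_on {..<n} f \<and> strict_mono_on {..<n} g \<and>
        (\<forall>v\<in>fv \<psi>. n * l \<le> v \<longrightarrow> \<beta> v \<in> B) \<longrightarrow>
        (sat U \<psi> (seq_asg l n f s \<beta>) \<longleftrightarrow> sat U \<psi> (seq_asg l n g s \<beta>))"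
      using ind unfolding indiscernible_def by blast
    have p2: "\<forall>v\<in>fv ?\<psi>. 2 * l \<le> v \<longrightarrow> ?\<beta>0 v \<in> B" using fv by auto
    show ?thesis using I[rule_format, OF conjI[OF sm[OF ij] conjI[OF sm[OF ij'] p2]]] .
  qed
  then show ?thesis using ev by simp
qed

lemma good_tup:
  assumes ind: "indiscernible U B (length as) s" and s0: "s 0 = as"
  shows "good (tup as a) (tup (s n) b) {1..length as}"
proof (rule goodI)
  let ?l = "length as"
  have len: "length (s n) = ?l" using ind by (simp add: indiscernible_def)
  have key: "tval U (tup as a) t = tval U (\<lambda>v. s 0 ! v) (mapvars (\<lambda>v. v - 1) t)"
    "tval U (tup (s n) b) t = tval U (\<lambda>v. s n ! v) (mapvars (\<lambda>v. v - 1) t)"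
    if "tvars t \<subseteq> {1..?l}" for t
    using tval_tup[OF that, of U a] tval_tup[of t "s n" U b] that len s0 by auto
  fix t assume tv: "tvars t \<subseteq> {1..?l}"
  define t0 where "t0 = mapvars (\<lambda>v. v - 1) t"
  have t0: "tvars t0 \<subseteq> {..<?l}" unfolding t0_def using tvars_shift[OF tv] .
  show "cg k j (tval U (tup as a) t) \<longleftrightarrow> cg k j (tval U (tup (s n) b) t)" for k j
    using indisc1[OF ind, of "Cong k j t0" 0 n] t0 key[OF tv] by (simp add: t0_def)
  show "tval U (tup as a) t = zr \<longleftrightarrow> tval U (tup (s n) b) t = zr"
    using indisc1[OF ind, of "Eq t0 Zero" 0 n] t0 key[OF tv] by (simp add: t0_def)
  fix m :: nat assume m: "1 \<le> m"
  let ?\<psi> = "Ex ?l (Conj (Eq (mulT m (Var ?l)) t0) (Pr (Var ?l)))"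
  have fvp: "fv ?\<psi> \<subseteq> {..<?l}" using t0 by auto
  have nl: "?l \<notin> tvars t0" using t0 by auto
  have ev: "sat U ?\<psi> (\<lambda>v. s i ! v) \<longleftrightarrow> Dx m (tval U (\<lambda>v. s i ! v) t0)" for i
    using nl by (auto simp: Dx_def)
  show "Dx m (tval U (tup as a) t) \<longleftrightarrow> Dx m (tval U (tup (s n) b) t)"
    using indisc1[OF ind fvp, of 0 n] ev[of 0] ev[of n] key[OF tv] by (simp add: t0_def)
qed

lemma cons_tup:
  assumes ind: "indiscernible U B (length as) s" and s0: "s 0 = as"
    and t: "tvars t \<subseteq> {1..length as}" and t': "tvars t' \<subseteq> {1..length as}"
    and eq: "mU p (tval U (tup (s n) a) t) = mU q (tval U (tup (s n') b) t')"
  shows "mU p (tval U (tup as c) t) = mU q (tval U (tup as d) t')"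
proof -
  let ?l = "length as"
  have len: "\<And>i. length (s i) = ?l" using ind by (simp add: indiscernible_def)
  define \<alpha> where "\<alpha> = mulT p (mapvars (\<lambda>v. v - 1) t)"
  define \<beta> where "\<beta> = mulT q (mapvars (\<lambda>v. v - 1) t')"
  have \<alpha>: "tvars \<alpha> \<subseteq> {..<?l}" unfolding \<alpha>_def using tvars_shift[OF t] by auto
  have \<beta>: "tvars \<beta> \<subseteq> {..<?l}" unfolding \<beta>_def using tvars_shift[OF t'] by auto
  have ka: "mU p (tval U (tup (s i) x) t) = tval U (\<lambda>v. s i ! v) \<alpha>" for i x
    using tval_tup[of t "s i" U x] t len by (simp add: \<alpha>_def)
  have kb: "mU q (tval U (tup (s i) x) t') = tval U (\<lambda>v. s i ! v) \<beta>" for i x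
    using tval_tup[of t' "s i" U x] t' len by (simp add: \<beta>_def)
  have E: "tval U (\<lambda>v. s n ! v) \<alpha> = tval U (\<lambda>v. s n' ! v) \<beta>" using eq ka kb by simp
  have goal: "tval U (\<lambda>v. s 0 ! v) \<alpha> = tval U (\<lambda>v. s 0 ! v) \<beta>"
  proof (cases n n' rule: linorder_cases)
    case equal
    have "sat U (Eq \<alpha> \<beta>) (\<lambda>v. s n ! v) \<longleftrightarrow> sat U (Eq \<alpha> \<beta>) (\<lambda>v. s 0 ! v)"
      by (rule indisc1[OF ind]) (use \<alpha> \<beta> in auto)
    then show ?thesis using E equal by simp
  next
    case less
    have e01: "tval U (\<lambda>v. s 0 ! v) \<alpha> = tval U (\<lambda>v. s 1 ! v) \<beta>"
      using indisc2[OF ind \<alpha> \<beta> less, of 0 1] E by simp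
    have e02: "tval U (\<lambda>v. s 0 ! v) \<alpha> = tval U (\<lambda>v. s 2 ! v) \<beta>"
      using indisc2[OF ind \<alpha> \<beta> less, of 0 2] E by simp
    have "tval U (\<lambda>v. s 1 ! v) \<beta> = tval U (\<lambda>v. s 2 ! v) \<beta>" using e01 e02 by simp
    then have "tval U (\<lambda>v. s 0 ! v) \<beta> = tval U (\<lambda>v. s 1 ! v) \<beta>"
      using indisc2[OF ind \<beta> \<beta>, of 1 2 0 1] by simp
    then show ?thesis using e01 by simp
  next
    case greater
    have E': "tval U (\<lambda>v. s n' ! v) \<beta> = tval U (\<lambda>v. s n ! v) \<alpha>" using E by simp
    have e01: "tval U (\<lambda>v. s 0 ! v) \<beta> = tval U (\<lambda>v. s 1 ! v) \<alpha>"
      using indisc2[OF ind \<beta> \<alpha> greater, of 0 1] E' by simp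
    have e02: "tval U (\<lambda>v. s 0 ! v) \<beta> = tval U (\<lambda>v. s 2 ! v) \<alpha>"
      using indisc2[OF ind \<beta> \<alpha> greater, of 0 2] E' by simp
    have "tval U (\<lambda>v. s 1 ! v) \<alpha> = tval U (\<lambda>v. s 2 ! v) \<alpha>" using e01 e02 by simp
    then have "tval U (\<lambda>v. s 0 ! v) \<alpha> = tval U (\<lambda>v. s 1 ! v) \<alpha>"
      using indisc2[OF ind \<alpha> \<alpha>, of 1 2 0 1] by simp
    then show ?thesis using e01 by simp
  qed
  have "mU p (tval U (tup as c) t) = tval U (\<lambda>v. s 0 ! v) \<alpha>" using ka[of 0 c] s0 by simp
  moreover have "mU q (tval U (tup as d) t') = tval U (\<lambda>v. s 0 ! v) \<beta>" using kb[of 0 d] s0 by simp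
  ultimately show ?thesis using goal by simp
qed

lemma generic_exists:
  assumes fvphi: "fv \<phi> \<subseteq> {..length as}" and inf: "infinite {c. sat U \<phi> (tup as c)}"
  shows "\<exists>c. sat U \<phi> (tup as c) \<and> generic (tup as zr) {1..length as} c"
proof -
  let ?V = "{1..length as}"
  define A1 where "A1 = (\<lambda>t. tval U (tup as zr) t) ` UNIV"
  define A where "A = A1 \<union> set as"
  have cA: "countable A" unfolding A_def A1_def using countable_tm countable_finite[OF finite_set[of as]] by auto
  define z0 :: "nat \<Rightarrow> 'b" where "z0 = (\<lambda>_. zr)"
  define g2 :: "nat \<times> 'b \<Rightarrow> fm \<times> (nat \<Rightarrow> 'b)" where "g2 p = (Not (Eq (mulT (fst p) (Var 0)) (Var 1)), z0(1 := snd p))" for p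
  define P2 where "P2 = {p :: nat \<times> 'b. 1 \<le> fst p \<and> snd p \<in> A1}"
  define \<Sigma> where "\<Sigma> = insert (\<phi>, tup as zr) (g2 ` P2)"
  have params: "\<forall>(\<psi>, \<sigma>)\<in>\<Sigma>. \<forall>v\<in>fv \<psi> - {0}. \<sigma> v \<in> A"
  proof -
    have "\<forall>v\<in>fv \<psi> - {0}. \<sigma> v \<in> A" if mem: "(\<psi>, \<sigma>) \<in> \<Sigma>" for \<psi> \<sigma>
    proof (cases "(\<psi>, \<sigma>) = (\<phi>, tup as zr)")
      case True
      have "tup as zr v \<in> set as" if "v \<in> fv \<phi> - {0}" for v
      proof -
        have "v \<noteq> 0" "v \<le> length as" using that fvphi by auto
        then show ?thesis by (auto simp: tup_def intro!: nth_mem)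
      qed
      then show ?thesis using True by (auto simp: A_def)
    next
      case False
      then obtain p where "p \<in> P2" "(\<psi>, \<sigma>) = g2 p" using mem unfolding \<Sigma>_def by blast
      then show ?thesis by (auto simp: g2_def P2_def A_def split: if_splits)
    qed
    then show ?thesis by blast
  qed
  have finsat: "\<exists>c. \<forall>(\<psi>, \<sigma>)\<in>F. sat U \<psi> (\<sigma>(0 := c))" if F: "F \<subseteq> \<Sigma>" "finite F" for F
  proof -
    have s2: "F \<inter> g2 ` P2 \<subseteq> g2 ` P2" by (rule Int_lower2)
    have f2: "finite (F \<inter> g2 ` P2)" using F(2) by (intro finite_Int disjI1)
    obtain C2 where C2: "C2 \<subseteq> P2" "finite C2" "F \<inter> g2 ` P2 = g2 ` C2"
      using finite_subset_image[OF f2 s2] by blast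
    have FC: "F \<subseteq> insert (\<phi>, tup as zr) (g2 ` C2)" using F(1) C2(3) unfolding \<Sigma>_def by blast
    define Xb where "Xb = {x. \<exists>p\<in>C2. mU (fst p) x = snd p}"
    have "finite Xb"
    proof -
      have "Xb = (\<Union>p\<in>C2. {x. mU (fst p) x = snd p})" by (auto simp: Xb_def)
      moreover have "finite {x. mU (fst p) x = snd p}" if "p \<in> C2" for p
      proof (rule finite_subsingleton)
        fix x y assume "mU (fst p) x = snd p" "mU (fst p) y = snd p"
        moreover have "1 \<le> fst p" using that C2(1) by (auto simp: P2_def)
        ultimately show "x = y" using mU_inj by metis
      qed
      ultimately show ?thesis using C2(2) by simp
    qed
    then have "infinite ({c. sat U \<phi> (tup as c)} - Xb)" using inf by (simp add: Diff_infinite_finite)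
    then obtain c where c: "sat U \<phi> (tup as c)" "c \<notin> Xb" using infinite_imp_nonempty by blast
    have "sat U \<psi> (\<sigma>(0 := c))" if mem: "(\<psi>, \<sigma>) \<in> F" for \<psi> \<sigma>
    proof -
      have "(\<psi>, \<sigma>) = (\<phi>, tup as zr) \<or> (\<exists>p\<in>C2. (\<psi>, \<sigma>) = g2 p)" using mem FC by blast
      then show ?thesis
      proof
        assume "(\<psi>, \<sigma>) = (\<phi>, tup as zr)"
        then show ?thesis using c(1) by (simp add: tup_upd)
      next
        assume "\<exists>p\<in>C2. (\<psi>, \<sigma>) = g2 p"
        then show ?thesis using c(2) by (auto simp: g2_def Xb_def)
      qed
    qed
    then show ?thesis by blast
  qed
  obtain c where c: "\<forall>(\<psi>, \<sigma>)\<in>\<Sigma>. sat U \<psi> (\<sigma>(0 := c))"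
    using sat_U[unfolded saturated_for_def, rule_format, of A \<Sigma>] small_countable[OF cA] params finsat by blast
  have "sat U \<phi> (tup as c)" using c unfolding \<Sigma>_def by (auto simp: tup_upd)
  moreover have "generic (tup as zr) ?V c"
    unfolding generic_def
  proof (intro allI impI)
    fix m :: nat and t assume m: "1 \<le> m" and "tvars t \<subseteq> ?V"
    have "g2 (m, tval U (tup as zr) t) \<in> \<Sigma>" using m unfolding \<Sigma>_def P2_def A1_def by auto
    then show "mU m c \<noteq> tval U (tup as zr) t" using c by (auto simp: g2_def)
  qed
  ultimately show ?thesis by blast
qed

lemma main_thm:
  assumes fvphi: "fv \<phi> \<subseteq> {..length as}" and dv: "divides U B \<phi> as"
  shows "finite {c. sat U \<phi> (tup as c)}"
proof (rule ccontr)
  assume inf: "infinite {c. sat U \<phi> (tup as c)}"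
  let ?V = "{1..length as}"
  obtain s where ind: "indiscernible U B (length as) s" and s0: "s 0 = as"
    and nc: "\<not> (\<forall>N. finite N \<longrightarrow> (\<exists>c. \<forall>n\<in>N. sat U \<phi> (tup (s n) c)))"
    using dv unfolding divides_def by blast
  then obtain N where noc: "\<not> (\<exists>c. \<forall>n\<in>N. sat U \<phi> (tup (s n) c))" by blast
  obtain c where c: "sat U \<phi> (tup as c)" and gen: "generic (tup as zr) ?V c"
    using generic_exists[OF fvphi inf] by blast
  have g: "\<forall>i\<in>N. good ((\<lambda>_. tup as zr) i) ((\<lambda>n. tup (s n) zr) i) ((\<lambda>_. ?V) i)"
    using good_tup[OF ind s0] by simp
  have gen': "\<forall>i\<in>N. generic ((\<lambda>_. tup as zr) i) ((\<lambda>_. ?V) i) c" using gen by simp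
  have cons: "\<forall>i\<in>N. \<forall>i'\<in>N. \<forall>t t' p q. tvars t \<subseteq> (\<lambda>_. ?V) i \<longrightarrow> tvars t' \<subseteq> (\<lambda>_. ?V) i' \<longrightarrow> 1 \<le> p \<longrightarrow> 1 \<le> q \<longrightarrow>
        mU p (tval U ((\<lambda>n. tup (s n) zr) i) t) = mU q (tval U ((\<lambda>n. tup (s n) zr) i') t') \<longrightarrow>
        mU p (tval U ((\<lambda>_. tup as zr) i) t) = mU q (tval U ((\<lambda>_. tup as zr) i') t')"
    using cons_tup[OF ind s0] by blast
  obtain v where v1: "\<forall>k j. cg k j v \<longleftrightarrow> cg k j c"
    and v2: "\<forall>i\<in>N. generic ((\<lambda>n. tup (s n) zr) i) ((\<lambda>_. ?V) i) v"
    and v3: "\<forall>i\<in>N. \<forall>m a t. tvars t \<subseteq> (\<lambda>_. ?V) i \<longrightarrow> 1 \<le> m \<longrightarrow> 1 \<le> a \<longrightarrow>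
        (Dx m (pl (mU a v) (tval U ((\<lambda>n. tup (s n) zr) i) t)) \<longleftrightarrow> Dx m (pl (mU a c) (tval U ((\<lambda>_. tup as zr) i) t)))"
    using real[OF g gen' cons] by blast
  have "sat U \<phi> (tup (s n) v)" if n: "n \<in> N" for n
  proof -
    have gn: "good (tup as zr) (tup (s n) zr) ?V" using good_tup[OF ind s0] .
    have x0: "0 \<notin> ?V" by simp
    have v2n: "generic (tup (s n) zr) ?V v" using v2 n by simp
    have v3n: "\<And>m a t. 1 \<le> m \<Longrightarrow> 1 \<le> a \<Longrightarrow> tvars t \<subseteq> ?V \<Longrightarrow>
       Dx m (pl (mU a v) (tval U (tup (s n) zr) t)) \<longleftrightarrow> Dx m (pl (mU a c) (tval U (tup as zr) t))"
      using v3 n by simp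
    have "good ((tup as zr)(0 := c)) ((tup (s n) zr)(0 := v)) (insert 0 ?V)"
      by (rule verify[OF gn x0 gen v2n]) (use v1 v3n in blast)+
    then have gg: "good (tup as c) (tup (s n) v) (insert 0 ?V)" by (simp add: tup_upd)
    have "fv \<phi> \<subseteq> insert 0 ?V" using fvphi by auto
    then show ?thesis using bf[OF gg] c by blast
  qed
  then show False using noc by blast
qed

end

theorem theorem3p3:
  fixes M :: "'a str" and e :: "int \<Rightarrow> 'a" and D :: "'a set"
    and U :: "'b str" and B :: "'b set" and \<phi> :: fm and as :: "'b list"
  assumes ext: "elem_ext_of_Z e M"
    and rand: "additively_random M e D"
    and symm: "\<forall>a. a \<in> D \<longleftrightarrow> s_neg M a \<in> D"
    and model: "elem_equiv (expand M D) U"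
    and sat_U: "saturated_for U B"
    and fv_phi: "fv \<phi> \<subseteq> {..length as}"
    and div: "divides U B \<phi> as"
  shows "finite {c. sat U \<phi> (tup as c)}"
proof -
  interpret setting M e D U B
    using ext rand symm model sat_U by (rule setting.intro)
  show ?thesis by (rule main_thm[OF fv_phi div])
qed


end
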